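(* Let $b_0>0$. There exists $\delta_8(b_0)>0$ such that for all $\delta\in(0,\delta_8)$ there exists $s_8(b_0,\delta)\ge1$ such that for all $s_0\ge s_8$: if $(q,b)(s)\in V_{\delta,b_0}(s)$ for all $s\in[s_0,\bar s]$, then $$|P_n(\mathcal R_s(q))(s)|\le CI(s)^{-2\delta}\quad\text{for all }s\in[s_0,\bar s],\ 0\le n\le[M],$$ with $C$ independent of $s,s_0$.
   Context: Fix $p>1$ and an integer $k\ge2$. Let $I(s)=e^{\frac s2(1-\frac1k)}$, $M=\frac{2kp}{p-1}$, $[M]$ the largest integer less than $M$, $e_b(y)=(p-1+by^{2k})^{-1}$. $\mathcal R_s(q)=I(s)^{-2}y^{2k-2}(\alpha_1+\alpha_2y^{2k}e_b+(\alpha_3+\alpha_4y^{2k}e_b)q)$ with $b=b(s)$, $\alpha_1=-2k(2k-1)\frac b{p-1}$, $\alpha_2=4pk^2\frac{b^2}{(p-1)^2}$, $\alpha_3=-2pk(2k-1)\frac b{p-1}$, $\alpha_4=4p(2p-1)k^2\frac{b^2}{(p-1)^2}$. Let $\rho_s(y)=\frac{I(s)}{\sqrt{4\pi}}e^{-I(s)^2y^2/4}$, $\langle f,g\rangle_{L^2_{\rho_s}}=\int fg\rho_s\,dy$, $H_m(y,s)=\sum_{\ell=0}^{[m/2]}\frac{m!}{\ell!(m-2\ell)!}(-I(s)^{-2})^\ell y^{m-2\ell}$; $P_m(g)=\langle g,H_m\rangle_{L^2_{\rho_s}}/\langle H_m,H_m\rangle_{L^2_{\rho_s}}$, $q_m=P_m(q)$,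 $q_-=q-\sum_{m=0}^{[M]}q_mH_m$, $|g|_s=\sup_y\frac{|g(y)|}{I(s)^{-M}+|y|^M}$. The shrinking set $V_{\delta,b_0}(s)$ is the set of pairs $(q,b)$ ($q$ with $(1+|y|^M)^{-1}q\in L^\infty$, $b\in\mathbb R$) with $|q_m|\le I(s)^{-\delta}$ for $0\le m\le[M]$, $m\ne2k$; $|q_{2k}|\le I(s)^{-2\delta}$; $|q_-|_s\le I(s)^{-\delta}$; and $\frac{b_0}2\le b\le2b_0$. *)

theory Defs
  imports "HOL-Analysis.Analysis"
begin

text \<open>Parameters: p > 1 (real), k >= 2 (nat).\<close>

definition I_s :: "nat \<Rightarrow> real \<Rightarrow> real" where
  "I_s k s = exp (s / 2 * (1 - 1 / real k))"

definition M_exp :: "real \<Rightarrow> nat \<Rightarrow> real" where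
  "M_exp p k = 2 * real k * p / (p - 1)"

text \<open>[M]: the largest integer strictly less than M.\<close>
definition M_floor :: "real \<Rightarrow> nat \<Rightarrow> nat" where
  "M_floor p k = nat (\<lceil>M_exp p k\<rceil> - 1)"

definition e_b :: "real \<Rightarrow> nat \<Rightarrow> real \<Rightarrow> real \<Rightarrow> real" where
  "e_b p k b y = 1 / (p - 1 + b * y ^ (2 * k))"

definition R_op :: "real \<Rightarrow> nat \<Rightarrow> real \<Rightarrow> real \<Rightarrow> (real \<Rightarrow> real) \<Rightarrow> real \<Rightarrow> real" where
  "R_op p k s b q y =
    (let a1 = - 2 * real k * (2 * real k - 1) * b / (p - 1);
         a2 = 4 * p * (real k)^2 * b^2 / (p - 1)^2;
         a3 = - 2 * p * real k * (2 * real k - 1) * b / (p - 1);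
         a4 = 4 * p * (2 * p - 1) * (real k)^2 * b^2 / (p - 1)^2;
         E = e_b p k b y
     in (I_s k s) powr (-2) * y ^ (2 * k - 2) *
        (a1 + a2 * y ^ (2 * k) * E + (a3 + a4 * y ^ (2 * k) * E) * q y))"

definition rho_s :: "nat \<Rightarrow> real \<Rightarrow> real \<Rightarrow> real" where
  "rho_s k s y = I_s k s / sqrt (4 * pi) * exp (- (((I_s k s) ^ 2) * (y ^ 2)) / 4)"

definition inner_rho :: "nat \<Rightarrow> real \<Rightarrow> (real \<Rightarrow> real) \<Rightarrow> (real \<Rightarrow> real) \<Rightarrow> real" where
  "inner_rho k s f g = (\<integral>y. f y * g y * rho_s k s y \<partial>lborel)"

definition H_poly :: "nat \<Rightarrow> nat \<Rightarrow> real \<Rightarrow> real \<Rightarrow> real" where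
  "H_poly k m s y = (\<Sum>l = 0..m div 2.
      fact m / (fact l * fact (m - 2 * l)) * (- ((I_s k s) powr (-2))) ^ l * y ^ (m - 2 * l))"

definition P_proj :: "nat \<Rightarrow> nat \<Rightarrow> real \<Rightarrow> (real \<Rightarrow> real) \<Rightarrow> real" where
  "P_proj k m s g = inner_rho k s g (H_poly k m s) / inner_rho k s (H_poly k m s) (H_poly k m s)"

definition q_minus :: "real \<Rightarrow> nat \<Rightarrow> real \<Rightarrow> (real \<Rightarrow> real) \<Rightarrow> real \<Rightarrow> real" where
  "q_minus p k s q y = q y - (\<Sum>m = 0..M_floor p k. P_proj k m s q * H_poly k m s y)"

text \<open>The weighted sup-norm |g|_s (as an extended real, so it is meaningful for unbounded g).\<close>
definition snorm :: "real \<Rightarrow> nat \<Rightarrow> real \<Rightarrow> (real \<Rightarrow> real) \<Rightarrow> ereal" where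
  "snorm p k s g = (SUP y. ereal (\<bar>g y\<bar> / ((I_s k s) powr (- M_exp p k) + \<bar>y\<bar> powr M_exp p k)))"

text \<open>Shrinking set V_{delta,b0}(s). The condition that (1+|y|^M)^{-1} q is in L^infinity is
  rendered as: q is Borel measurable and (1+|y|^M)^{-1} q is bounded.\<close>
definition in_V :: "real \<Rightarrow> nat \<Rightarrow> real \<Rightarrow> real \<Rightarrow> real \<Rightarrow> (real \<Rightarrow> real) \<Rightarrow> real \<Rightarrow> bool" where
  "in_V p k \<delta> b0 s q b \<longleftrightarrow>
     q \<in> borel_measurable borel \<and>
     (\<exists>K. \<forall>y. \<bar>q y\<bar> / (1 + \<bar>y\<bar> powr M_exp p k) \<le> K) \<and>
     (\<forall>m \<le> M_floor p k. m \<noteq> 2 * k \<longrightarrow> \<bar>P_proj k m s q\<bar> \<le> (I_s k s) powr (- \<delta>)) \<and>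
     \<bar>P_proj k (2 * k) s q\<bar> \<le> (I_s k s) powr (- 2 * \<delta>) \<and>
     snorm p k s (q_minus p k s q) \<le> ereal ((I_s k s) powr (- \<delta>)) \<and>
     b0 / 2 \<le> b \<and> b \<le> 2 * b0"

end

theory Submission imports Defs "HOL-Probability.Distributions" "HOL-Computational_Algebra.Polynomial"
begin


definition ES :: "real poly \<Rightarrow> nat \<Rightarrow> real" where
  "ES f j = (\<integral>z. std_normal_density z * (z ^ j * poly f z) \<partial>lborel)"

lemma intg_ES: "integrable lborel (\<lambda>z. std_normal_density z * (z ^ j * poly f z))"
proof (induction f arbitrary: j rule: pCons_induct)
  case 0
  then show ?case by simp
next
  case (pCons a f)
  have e: "(\<lambda>z. std_normal_density z * (z ^ j * poly (pCons a f) z)) =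
     (\<lambda>z. a * (std_normal_density z * z ^ j) + std_normal_density z * (z ^ Suc j * poly f z))"
    by (auto simp: algebra_simps)
  show ?case unfolding e
    by (intro Bochner_Integration.integrable_add integrable_mult_right integrable_std_normal_moment pCons.IH)
qed

lemma ES_pCons: "ES (pCons a f) j = a * ES 1 j + ES f (Suc j)"
proof -
  have e: "(\<lambda>z. std_normal_density z * (z ^ j * poly (pCons a f) z)) =
     (\<lambda>z. a * (std_normal_density z * (z ^ j * poly 1 z)) + std_normal_density z * (z ^ Suc j * poly f z))"
    by (auto simp: algebra_simps)
  have i1: "integrable lborel (\<lambda>z. a * (std_normal_density z * (z ^ j * poly 1 z)))"
    by (rule integrable_mult_right) (rule intg_ES)
  show ?thesis unfolding ES_def e
    by (subst Bochner_Integration.integral_add[OF i1 intg_ES]) simp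
qed

lemma ES_add: "ES (f + g) j = ES f j + ES g j"
proof -
  have e: "(\<lambda>z. std_normal_density z * (z ^ j * poly (f + g) z)) =
     (\<lambda>z. std_normal_density z * (z ^ j * poly f z) + std_normal_density z * (z ^ j * poly g z))"
    by (auto simp: algebra_simps)
  show ?thesis unfolding ES_def e
    by (subst Bochner_Integration.integral_add) (auto intro: intg_ES)
qed

lemma ES_minus: "ES (f - g) j = ES f j - ES g j"
proof -
  have e: "(\<lambda>z. std_normal_density z * (z ^ j * poly (f - g) z)) =
     (\<lambda>z. std_normal_density z * (z ^ j * poly f z) - std_normal_density z * (z ^ j * poly g z))"
    by (auto simp: algebra_simps)
  show ?thesis unfolding ES_def e
    by (subst Bochner_Integration.integral_diff) (auto intro: intg_ES)
qed

lemma mom_rec: "ES 1 (Suc j) = real j * ES 1 (j - 1)"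
proof -
  have m: "ES 1 i = (\<integral>z. std_normal_density z * z ^ i \<partial>lborel)" for i
    unfolding ES_def by simp
  show ?thesis
  proof (cases "even j")
    case True
    then obtain m where j: "j = 2 * m" by (auto elim: evenE)
    have "ES 1 (Suc j) = 0" unfolding m j using integral_std_normal_moment_odd[of m] by simp
    moreover have "real j * ES 1 (j - 1) = 0"
    proof (cases m)
      case 0 then show ?thesis using j by simp
    next
      case (Suc m')
      have "j - 1 = 2 * m' + 1" using j Suc by simp
      then show ?thesis unfolding m using integral_std_normal_moment_odd[of m'] by simp
    qed
    ultimately show ?thesis by simp
  next
    case False
    then obtain m where j: "j = 2 * m + 1" by (metis oddE)
    have a: "ES 1 (Suc j) = fact (2 * Suc m) / (2 ^ Suc m * fact (Suc m))"
    proof -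
      have "Suc j = 2 * Suc m" using j by simp
      then show ?thesis unfolding m by (simp only: integral_std_normal_moment_even)
    qed
    have b: "ES 1 (j - 1) = fact (2 * m) / (2 ^ m * fact m)"
    proof -
      have "j - 1 = 2 * m" using j by simp
      then show ?thesis unfolding m by (simp only: integral_std_normal_moment_even)
    qed
    have e2: "2 * Suc m = Suc (Suc (2 * m))" by simp
    have f1: "(fact (2 * Suc m) :: real) = (real (2 * m) + 2) * ((real (2 * m) + 1) * fact (2 * m))"
      unfolding e2 fact_Suc by (simp add: algebra_simps)
    have f2: "(fact (Suc m) :: real) = (real m + 1) * fact m"
      unfolding fact_Suc by simp
    have pos: "(fact m :: real) > 0" "(2::real) ^ m > 0" by auto
    have "fact (2 * Suc m) / (2 ^ Suc m * fact (Suc m)) = real j * (fact (2 * m) / (2 ^ m * fact m) :: real)"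
    proof -
      have "fact (2 * Suc m) / (2 ^ Suc m * fact (Suc m)) =
          (2 * (real m + 1) * ((2 * real m + 1) * fact (2 * m))) / (2 * (real m + 1) * (2 ^ m * fact m) :: real)"
        unfolding f1 f2 by (simp add: algebra_simps)
      also have "\<dots> = ((2 * real m + 1) * fact (2 * m)) / (2 ^ m * fact m)"
        by (rule mult_divide_mult_cancel_left) simp
      finally show ?thesis unfolding j by simp
    qed
    then show ?thesis unfolding a b .
  qed
qed

lemma stein: "ES f (Suc j) = real j * ES f (j - 1) + ES (pderiv f) j"
proof (induction f arbitrary: j rule: pCons_induct)
  case 0
  then show ?case by (simp add: ES_def)
next
  case (pCons a f)
  have jj: "real j * ES f (Suc (j - 1)) = real j * ES f j" by (cases j) auto
  have "ES (pCons a f) (Suc j) = a * ES 1 (Suc j) + ES f (Suc (Suc j))" by (rule ES_pCons)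
  also have "\<dots> = a * (real j * ES 1 (j - 1)) + (real (Suc j) * ES f j + ES (pderiv f) (Suc j))"
    using pCons.IH[of "Suc j"] mom_rec by simp
  also have "\<dots> = real j * ES (pCons a f) (j - 1) + ES (pderiv (pCons a f)) j"
  proof -
    have "ES (pderiv (pCons a f)) j = ES f j + ES (pderiv f) (Suc j)"
      unfolding pderiv_pCons ES_add using ES_pCons[of 0 "pderiv f" j] by simp
    moreover have "ES (pCons a f) (j - 1) = a * ES 1 (j - 1) + ES f (Suc (j - 1))"
      by (rule ES_pCons)
    moreover have "real j * (a * ES 1 (j - 1) + ES f (Suc (j - 1))) = a * (real j * ES 1 (j - 1)) + real j * ES f (Suc (j - 1))"
      by (simp only: distrib_left mult.left_commute)
    ultimately show ?thesis unfolding jj by (simp only: of_nat_Suc distrib_right mult_1_left add_ac)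
  qed
  finally show ?case .
qed

fun hep :: "nat \<Rightarrow> real poly" where
  "hep 0 = 1"
| "hep (Suc n) = pCons 0 (hep n) - pderiv (hep n)"

declare hep.simps(2)[simp del]

lemma ES_hep_Suc: "ES (hep (Suc n)) j = real j * ES (hep n) (j - 1)"
proof -
  have "ES (pCons 0 (hep n)) j = ES (hep n) (Suc j)" using ES_pCons[of 0 "hep n" j] by simp
  moreover have "ES (hep (Suc n)) j = ES (pCons 0 (hep n)) j - ES (pderiv (hep n)) j"
    unfolding hep.simps(2) by (rule ES_minus)
  ultimately show ?thesis using stein[of "hep n" j] by linarith
qed

lemma hep_orth: "j < n \<Longrightarrow> ES (hep n) j = 0"
proof (induction n arbitrary: j)
  case 0 then show ?case by simp
next
  case (Suc n)
  show ?case
  proof (cases j)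
    case 0 then show ?thesis by (simp add: ES_hep_Suc)
  next
    case (Suc j') then show ?thesis using Suc.prems Suc.IH[of j'] by (simp add: ES_hep_Suc)
  qed
qed




definition cfl :: "nat \<Rightarrow> nat \<Rightarrow> real" where
  "cfl i l = fact (i + 2 * l) / (fact l * fact i) * (- 1 / 2) ^ l"

definition cf :: "nat \<Rightarrow> nat \<Rightarrow> real" where
  "cf n i = (if i \<le> n \<and> even (n - i) then cfl i ((n - i) div 2) else 0)"

lemma arithG:
  fixes F A B x U V W :: real
  assumes "A \<noteq> 0" "B \<noteq> 0" "U \<noteq> 0" "V \<noteq> 0" "W \<noteq> 0"
  shows "(V + 2 * U) * F / (U * A * (V * B)) * (- x / 2) =
    F / (U * A * B) * (- x / 2) - W * (F / (A * (W * (V * B))) * x)"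
proof -
  define c where "c = F / (U * A * (V * B))"
  have 1: "(V + 2 * U) * F / (U * A * (V * B)) * (- x / 2) = c * (V + 2 * U) * (- x / 2)"
    unfolding c_def by simp
  have 2: "F / (U * A * B) = c * V" unfolding c_def using assms by (simp add: field_simps)
  have 3: "W * (F / (A * (W * (V * B))) * x) = c * U * x" unfolding c_def using assms by (simp add: field_simps)
  show ?thesis unfolding 1 2 3 by (simp add: algebra_simps)
qed

lemma cfl_G: "cfl (Suc i) (Suc l) = cfl i (Suc l) - real (i + 2) * cfl (i + 2) l"
proof -
  define F where "F = (fact (i + 2 * l + 2) :: real)"
  define A where "A = (fact l :: real)"
  define B where "B = (fact i :: real)"
  define x where "x = ((- 1 / 2) ^ l :: real)"
  have pos: "F > 0" "A > 0" "B > 0" unfolding F_def A_def B_def by auto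
  have e1: "cfl (Suc i) (Suc l) = (real i + 2 * real l + 3) * F / ((real l + 1) * A * ((real i + 1) * B)) * (- x / 2)"
  proof -
    have "Suc i + 2 * Suc l = Suc (i + 2 * l + 2)" by simp
    then show ?thesis unfolding cfl_def F_def A_def B_def x_def
      by (simp only: fact_Suc of_nat_Suc) (simp add: algebra_simps)
  qed
  have e2: "cfl i (Suc l) = F / ((real l + 1) * A * B) * (- x / 2)"
  proof -
    have "i + 2 * Suc l = i + 2 * l + 2" by simp
    then show ?thesis unfolding cfl_def F_def A_def B_def x_def
      by (simp only: fact_Suc of_nat_Suc) (simp add: algebra_simps)
  qed
  have e3: "cfl (i + 2) l = F / (A * ((real i + 2) * ((real i + 1) * B))) * x"
  proof -
    have "i + 2 + 2 * l = i + 2 * l + 2" by simp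
    moreover have "i + 2 = Suc (Suc i)" by simp
    ultimately show ?thesis unfolding cfl_def F_def A_def B_def x_def
      by (simp only: fact_Suc of_nat_Suc) (simp add: algebra_simps)
  qed
  have r: "real i + 2 * real l + 3 = (real i + 1) + 2 * (real l + 1)" "real (i + 2) = real i + 2" by simp_all
  show ?thesis unfolding e1 e2 e3 r
    by (rule arithG) (use pos in auto)
qed

lemma cfl_H: "cfl 0 (Suc l) = - cfl 1 l"
proof -
  define G where "G = (fact (2 * l) :: real)"
  define fl where "fl = (fact l :: real)"
  define x where "x = ((- 1 / 2) ^ l :: real)"
  have "fl > 0" unfolding fl_def by auto
  have f1: "(fact (2 * Suc l) :: real) = (2 * (real l + 1)) * ((2 * real l + 1) * G)"
  proof -
    have "2 * Suc l = Suc (Suc (2 * l))" by simp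
    then show ?thesis unfolding G_def by (simp only: fact_Suc of_nat_Suc) (simp add: algebra_simps)
  qed
  have f2: "(fact (1 + 2 * l) :: real) = (2 * real l + 1) * G"
    unfolding G_def by (simp only: add.commute[of 1] Suc_eq_plus1[symmetric] fact_Suc of_nat_Suc) (simp add: algebra_simps)
  have f3: "(fact (Suc l) :: real) = (real l + 1) * fl" unfolding fl_def by (simp add: fact_Suc)
  have "cfl 0 (Suc l) = (2 * (real l + 1)) * ((2 * real l + 1) * G) / ((real l + 1) * fl) * (- 1 / 2 * x)"
    unfolding cfl_def f1 f3 x_def G_def by (simp add: algebra_simps)
  also have "\<dots> = - ((2 * real l + 1) * G / fl * x)"
  proof -
    define L where "L = real l + 1"
    define Q where "Q = (2 * real l + 1) * G"
    have "L \<noteq> 0" unfolding L_def by simp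
    then have "(2 * L) * Q / (L * fl) * (- 1 / 2 * x) = - (Q / fl * x)" using \<open>fl > 0\<close> by (simp add: field_simps)
    then show ?thesis unfolding L_def Q_def .
  qed
  also have "\<dots> = - cfl 1 l" unfolding cfl_def f2 x_def fl_def by simp
  finally show ?thesis .
qed

lemma cfl_0: "cfl i 0 = 1"
  unfolding cfl_def by simp

lemma cf_rec: "cf (Suc n) i = (if i = 0 then 0 else cf n (i - 1)) - real (Suc i) * cf n (Suc i)"
proof (cases "i \<le> Suc n")
  case False
  then show ?thesis unfolding cf_def by auto
next
  case True
  then obtain d where d: "Suc n = i + d" by (metis le_add_diff_inverse)
  show ?thesis
  proof (cases "even d")
    case False
    have a: "cf (Suc n) i = 0" using False d unfolding cf_def by simp
    have b: "i \<noteq> 0 \<Longrightarrow> cf n (i - 1) = 0" using False d unfolding cf_def by simp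
    have c: "cf n (Suc i) = 0"
    proof (cases "Suc i \<le> n")
      case True
      then have "n - Suc i = d - 2" "d \<ge> 2" using d by auto
      then have "odd (n - Suc i)" using False by (simp add: even_diff_nat)
      then show ?thesis unfolding cf_def by simp
    qed (simp add: cf_def)
    show ?thesis using a b c by simp
  next
    case True
    then obtain l where l: "d = 2 * l" by (auto elim: evenE)
    show ?thesis
    proof (cases l)
      case 0
      then have i: "i = Suc n" using d l by simp
      have "cf (Suc n) i = 1" unfolding cf_def i by (simp add: cfl_0)
      moreover have "cf n (i - 1) = 1" unfolding cf_def i by (simp add: cfl_0)
      moreover have "cf n (Suc i) = 0" unfolding cf_def i by simp
      ultimately show ?thesis using i by simp
    next
      case (Suc l')
      have a: "cf (Suc n) i = cfl i (Suc l')" unfolding cf_def using d l Suc by simp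
      have c: "cf n (Suc i) = cfl (Suc i) l'"
      proof -
        have "Suc i \<le> n" "n - Suc i = 2 * l'" using d l Suc by auto
        then show ?thesis unfolding cf_def by simp
      qed
      show ?thesis
      proof (cases i)
        case 0
        then show ?thesis using a c cfl_H by simp
      next
        case (Suc i')
        have b: "cf n (i - 1) = cfl i' (Suc l')"
        proof -
          have "i' \<le> n" "n - i' = 2 * Suc l'" using d l \<open>l = Suc l'\<close> Suc by auto
          then show ?thesis unfolding cf_def Suc by simp
        qed
        have "cfl (Suc i') (Suc l') = cfl i' (Suc l') - real (i' + 2) * cfl (i' + 2) l'" by (rule cfl_G)
        then show ?thesis using a b c Suc by (simp add: add.commute)
      qed
    qed
  qed
qed

lemma coeff_hep: "coeff (hep n) i = cf n i"
proof (induction n arbitrary: i)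
  case 0
  then show ?case unfolding cf_def by (simp add: cfl_0)
next
  case (Suc n)
  have "coeff (hep (Suc n)) i = (case i of 0 \<Rightarrow> 0 | Suc i' \<Rightarrow> coeff (hep n) i') - real (Suc i) * coeff (hep n) (Suc i)"
    by (simp add: hep.simps(2) coeff_pCons coeff_pderiv)
  also have "\<dots> = cf (Suc n) i" unfolding cf_rec Suc.IH by (cases i) auto
  finally show ?case .
qed

lemma degree_hep: "degree (hep n) \<le> n"
  by (rule Polynomial.degree_le) (simp add: coeff_hep cf_def)

lemma poly_hep: "poly (hep n) z = (\<Sum>l = 0..n div 2. fact n / (fact l * fact (n - 2 * l)) * (- 1 / 2) ^ l * z ^ (n - 2 * l))"
proof -
  have "poly (hep n) z = (\<Sum>i\<le>n. coeff (hep n) i * z ^ i)"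
    unfolding poly_altdef
    using degree_hep[of n] by (intro sum.mono_neutral_left) (auto simp: coeff_eq_0)
  also have "\<dots> = (\<Sum>i\<in>(\<lambda>l. n - 2 * l) ` {0..n div 2}. coeff (hep n) i * z ^ i)"
  proof (rule sum.mono_neutral_right)
    show "(\<lambda>l. n - 2 * l) ` {0..n div 2} \<subseteq> {..n}" by auto
    show "\<forall>i\<in>{..n} - (\<lambda>l. n - 2 * l) ` {0..n div 2}. coeff (hep n) i * z ^ i = 0"
    proof
      fix i assume i: "i \<in> {..n} - (\<lambda>l. n - 2 * l) ` {0..n div 2}"
      have "odd (n - i)"
      proof
        assume "even (n - i)"
        then have "i = n - 2 * ((n - i) div 2)" "(n - i) div 2 \<in> {0..n div 2}" using i by auto
        then show False using i by blast
      qed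
      then show "coeff (hep n) i * z ^ i = 0" by (simp add: coeff_hep cf_def)
    qed
  qed simp
  also have "\<dots> = (\<Sum>l = 0..n div 2. coeff (hep n) (n - 2 * l) * z ^ (n - 2 * l))"
    by (rule sum.reindex_cong[where l = "\<lambda>l. n - 2 * l"]) (auto simp: inj_on_def)
  also have "\<dots> = (\<Sum>l = 0..n div 2. fact n / (fact l * fact (n - 2 * l)) * (- 1 / 2) ^ l * z ^ (n - 2 * l))"
  proof (rule sum.cong)
    fix l assume l: "l \<in> {0..n div 2}"
    then have e: "n - (n - 2 * l) = 2 * l" "n - 2 * l + 2 * l = n" by auto
    show "coeff (hep n) (n - 2 * l) * z ^ (n - 2 * l) = fact n / (fact l * fact (n - 2 * l)) * (- 1 / 2) ^ l * z ^ (n - 2 * l)"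
      unfolding coeff_hep cf_def cfl_def e(1) using e(2) by simp
  qed simp
  finally show ?thesis .
qed




lemma I_s_pos: "I_s k s > 0" unfolding I_s_def by simp

lemma powr_m2: "(x::real) > 0 \<Longrightarrow> x powr (-2) = 1 / x ^ 2"
  by (simp add: powr_minus powr_numeral divide_inverse)

lemma H_scale:
  assumes "I_s k s = I" "\<sigma> = sqrt 2 / I"
  shows "H_poly k m s (\<sigma> * z) = \<sigma> ^ m * poly (hep m) z"
proof -
  have I: "I > 0" using assms I_s_pos by metis
  have a: "- (I_s k s powr (-2)) = \<sigma> ^ 2 * (- 1 / 2)"
    using I unfolding assms powr_m2[OF I] by (simp add: power_divide)
  have t: "fact m / (fact l * fact (m - 2 * l)) * (- (I_s k s powr (-2))) ^ l * (\<sigma> * z) ^ (m - 2 * l)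
      = \<sigma> ^ m * (fact m / (fact l * fact (m - 2 * l)) * (- 1 / 2) ^ l * z ^ (m - 2 * l))"
    if "l \<in> {0..m div 2}" for l
  proof -
    from that have e: "2 * l + (m - 2 * l) = m" by auto
    define A where "A = \<sigma> ^ (2 * l)"
    define B where "B = \<sigma> ^ (m - 2 * l)"
    define c where "c = (fact m / (fact l * fact (m - 2 * l)) :: real)"
    have sm: "\<sigma> ^ m = A * B" unfolding A_def B_def by (subst e[symmetric], subst power_add) (rule refl)
    have p1: "(\<sigma> ^ 2 * (- 1 / 2)) ^ l = A * (- 1 / 2) ^ l"
      unfolding A_def power_mult_distrib power_mult by (rule refl)
    have p2: "(\<sigma> * z) ^ (m - 2 * l) = B * z ^ (m - 2 * l)"
      unfolding B_def power_mult_distrib by (rule refl)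
    show ?thesis unfolding a p1 p2 sm c_def[symmetric] by (simp only: ac_simps)
  qed
  show ?thesis unfolding H_poly_def poly_hep sum_distrib_left using t by (rule sum.cong[OF refl])
qed

lemma rho_scale:
  assumes "I_s k s = I" "\<sigma> = sqrt 2 / I"
  shows "\<sigma> * rho_s k s (\<sigma> * z) = std_normal_density z"
proof -
  have I: "I > 0" using assms I_s_pos by metis
  have e1: "I ^ 2 * (\<sigma> * z) ^ 2 = 2 * z ^ 2" unfolding assms using I by (simp add: power_mult_distrib power_divide)
  have e2: "\<sigma> * I = sqrt 2" unfolding assms using I by simp
  have e3: "sqrt (4 * pi) = sqrt 2 * sqrt (2 * pi)" by (simp add: real_sqrt_mult[symmetric])
  have "\<sigma> * rho_s k s (\<sigma> * z) = (\<sigma> * I) / sqrt (4 * pi) * exp (- (2 * z ^ 2) / 4)"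
    unfolding rho_s_def assms(1) e1 by simp
  then show ?thesis unfolding std_normal_density_def e2 e3 by simp
qed

lemma inner_scale:
  assumes "I_s k s = I" "\<sigma> = sqrt 2 / I"
  shows "inner_rho k s f g = (\<integral>z. std_normal_density z * (f (\<sigma> * z) * g (\<sigma> * z)) \<partial>lborel)"
proof -
  have I: "I > 0" using assms I_s_pos by metis
  then have s: "\<sigma> > 0" using assms by simp
  have "inner_rho k s f g = \<bar>\<sigma>\<bar> *\<^sub>R (\<integral>z. f (0 + \<sigma> * z) * g (0 + \<sigma> * z) * rho_s k s (0 + \<sigma> * z) \<partial>lborel)"
    unfolding inner_rho_def by (rule lborel_integral_real_affine) (use s in simp)
  also have "\<dots> = \<sigma> * (\<integral>z. f (\<sigma> * z) * g (\<sigma> * z) * rho_s k s (\<sigma> * z) \<partial>lborel)"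
    using s by simp
  also have "\<dots> = (\<integral>z. \<sigma> * (f (\<sigma> * z) * g (\<sigma> * z) * rho_s k s (\<sigma> * z)) \<partial>lborel)"
    by (rule integral_mult_right_zero[symmetric])
  also have "\<dots> = (\<integral>z. std_normal_density z * (f (\<sigma> * z) * g (\<sigma> * z)) \<partial>lborel)"
  proof (rule Bochner_Integration.integral_cong[OF refl])
    fix z
    show "\<sigma> * (f (\<sigma> * z) * g (\<sigma> * z) * rho_s k s (\<sigma> * z)) = std_normal_density z * (f (\<sigma> * z) * g (\<sigma> * z))"
    proof -
      have "\<sigma> * (f (\<sigma> * z) * g (\<sigma> * z) * rho_s k s (\<sigma> * z)) = (\<sigma> * rho_s k s (\<sigma> * z)) * (f (\<sigma> * z) * g (\<sigma> * z))"
        by (simp only: ac_simps)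
      then show ?thesis unfolding rho_scale[OF assms, of z] .
    qed
  qed
  finally show ?thesis .
qed

lemma poly_meas[measurable]: "(\<lambda>z. poly p z :: real) \<in> borel_measurable borel"
  by (intro borel_measurable_continuous_onI continuous_intros)

lemma intg_abs_poly: "integrable lborel (\<lambda>z. std_normal_density z * \<bar>poly p z\<bar>)"
proof -
  have "integrable lborel (\<lambda>z. \<bar>std_normal_density z * (z ^ 0 * poly p z)\<bar>)"
    by (rule integrable_abs) (rule intg_ES)
  then show ?thesis by (simp add: abs_mult)
qed

lemma sq_bound: "1 + sqrt 2 * \<bar>z\<bar> \<le> poly [:2, 0, 1:] (z :: real)"
proof -
  have "0 \<le> (\<bar>z\<bar> - sqrt 2) ^ 2" by simp
  also have "\<dots> = z ^ 2 - 2 * sqrt 2 * \<bar>z\<bar> + 2" by (simp add: power2_diff power2_abs)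
  finally have "z ^ 2 - 2 * sqrt 2 * \<bar>z\<bar> + 2 \<ge> 0" .
  moreover have "z ^ 2 \<ge> 0" by simp
  ultimately have "sqrt 2 * \<bar>z\<bar> \<le> 1 + z ^ 2" by linarith
  then show ?thesis by (simp add: power2_eq_square)
qed

lemma intg_bnd: "integrable lborel (\<lambda>z. std_normal_density z * ((1 + sqrt 2 * \<bar>z\<bar>) ^ N * \<bar>poly p z\<bar>))"
proof (rule Bochner_Integration.integrable_bound[OF intg_abs_poly[of "[:2, 0, 1:] ^ N * p"]])
  show "(\<lambda>z. std_normal_density z * ((1 + sqrt 2 * \<bar>z\<bar>) ^ N * \<bar>poly p z\<bar>)) \<in> borel_measurable lborel"
    by measurable
  show "AE z in lborel. norm (std_normal_density z * ((1 + sqrt 2 * \<bar>z\<bar>) ^ N * \<bar>poly p z\<bar>))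
       \<le> norm (std_normal_density z * \<bar>poly ([:2, 0, 1:] ^ N * p) z\<bar>)"
  proof (rule AE_I2)
    fix z :: real
    have "(1 + sqrt 2 * \<bar>z\<bar>) ^ N \<le> poly [:2, 0, 1:] z ^ N"
      by (rule power_mono[OF sq_bound]) simp
    then have "(1 + sqrt 2 * \<bar>z\<bar>) ^ N * \<bar>poly p z\<bar> \<le> \<bar>poly ([:2, 0, 1:] ^ N * p) z\<bar>"
      by (simp add: abs_mult poly_power power_abs mult_right_mono)
    then show "norm (std_normal_density z * ((1 + sqrt 2 * \<bar>z\<bar>) ^ N * \<bar>poly p z\<bar>))
       \<le> norm (std_normal_density z * \<bar>poly ([:2, 0, 1:] ^ N * p) z\<bar>)"
      by (simp add: abs_mult mult_left_mono)
  qed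
qed

definition Kc :: "nat \<Rightarrow> nat \<Rightarrow> real" where
  "Kc n N = (\<integral>z. std_normal_density z * ((1 + sqrt 2 * \<bar>z\<bar>) ^ N * \<bar>poly (hep n) z\<bar>) \<partial>lborel)
     / (sqrt 2 ^ n * (\<integral>z. std_normal_density z * (poly (hep n) z * poly (hep n) z) \<partial>lborel))"

lemma Kc_nonneg: "Kc n N \<ge> 0"
  unfolding Kc_def by (intro divide_nonneg_nonneg mult_nonneg_nonneg integral_nonneg_AE) auto




lemma KL:
  assumes g: "g \<in> borel_measurable borel"
    and bnd: "\<And>y. \<bar>g y - (\<Sum>i<n. c i * y ^ i)\<bar> \<le> K / I_s k s ^ n * (1 + I_s k s * \<bar>y\<bar>) ^ N"
  shows "\<bar>P_proj k n s g\<bar> \<le> K * Kc n N"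
proof -
  define I where "I = I_s k s"
  define \<sigma> where "\<sigma> = sqrt 2 / I"
  have I: "I > 0" unfolding I_def by (rule I_s_pos)
  have s: "\<sigma> > 0" unfolding \<sigma>_def using I by simp
  have sI: "I * \<sigma> = sqrt 2" unfolding \<sigma>_def using I by simp
  define h where "h = (\<lambda>z. poly (hep n) z)"
  define T where "T = (\<lambda>y::real. \<Sum>i<n. c i * y ^ i)"
  define r where "r = (\<lambda>y. g y - T y)"
  define A where "A = (\<integral>z. std_normal_density z * ((1 + sqrt 2 * \<bar>z\<bar>) ^ N * \<bar>poly (hep n) z\<bar>) \<partial>lborel)"
  define D where "D = (\<integral>z. std_normal_density z * (poly (hep n) z * poly (hep n) z) \<partial>lborel)"
  have Kc: "Kc n N = A / (sqrt 2 ^ n * D)" unfolding Kc_def A_def D_def ..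
  have K0: "K \<ge> 0"
  proof -
    have "0 \<le> K / I ^ n * (1 + I * \<bar>0\<bar>) ^ N" using bnd[of 0] unfolding I_def by (meson abs_ge_zero order_trans)
    moreover have "I ^ n > 0" using I by simp
    ultimately show ?thesis by (simp add: zero_le_divide_iff)
  qed
  have D0: "D \<ge> 0" unfolding D_def by (intro integral_nonneg_AE) auto
  have A0: "A \<ge> 0" unfolding A_def by (intro integral_nonneg_AE) auto
  have Tm: "T \<in> borel_measurable borel" unfolding T_def by measurable
  have rm: "r \<in> borel_measurable borel" unfolding r_def using g Tm by measurable
  have rb: "\<bar>r (\<sigma> * z)\<bar> \<le> K / I ^ n * (1 + sqrt 2 * \<bar>z\<bar>) ^ N" for z
  proof -
    have "I * \<bar>\<sigma> * z\<bar> = sqrt 2 * \<bar>z\<bar>" using s sI by (simp add: abs_mult)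
    then show ?thesis using bnd[of "\<sigma> * z"] unfolding r_def T_def I_def by simp
  qed
  have inner1: "inner_rho k s g (H_poly k n s) = \<sigma> ^ n * (\<integral>z. std_normal_density z * (g (\<sigma> * z) * h z) \<partial>lborel)"
  proof -
    have "inner_rho k s g (H_poly k n s) = (\<integral>z. std_normal_density z * (g (\<sigma> * z) * H_poly k n s (\<sigma> * z)) \<partial>lborel)"
      by (rule inner_scale) (simp_all add: I_def \<sigma>_def)
    also have "\<dots> = (\<integral>z. \<sigma> ^ n * (std_normal_density z * (g (\<sigma> * z) * h z)) \<partial>lborel)"
      by (rule Bochner_Integration.integral_cong[OF refl])
        (simp only: H_scale[OF I_def[symmetric] \<sigma>_def], simp only: h_def ac_simps)
    also have "\<dots> = \<sigma> ^ n * (\<integral>z. std_normal_density z * (g (\<sigma> * z) * h z) \<partial>lborel)"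
      by (rule integral_mult_right_zero)
    finally show ?thesis .
  qed
  have inner2: "inner_rho k s (H_poly k n s) (H_poly k n s) = \<sigma> ^ n * \<sigma> ^ n * D"
  proof -
    have "inner_rho k s (H_poly k n s) (H_poly k n s) = (\<integral>z. std_normal_density z * (H_poly k n s (\<sigma> * z) * H_poly k n s (\<sigma> * z)) \<partial>lborel)"
      by (rule inner_scale) (simp_all add: I_def \<sigma>_def)
    also have "\<dots> = (\<integral>z. (\<sigma> ^ n * \<sigma> ^ n) * (std_normal_density z * (poly (hep n) z * poly (hep n) z)) \<partial>lborel)"
      by (rule Bochner_Integration.integral_cong[OF refl])
        (simp only: H_scale[OF I_def[symmetric] \<sigma>_def], simp only: ac_simps)
    also have "\<dots> = \<sigma> ^ n * \<sigma> ^ n * D" unfolding D_def by (rule integral_mult_right_zero)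
    finally show ?thesis .
  qed
  define X where "X = (\<integral>z. std_normal_density z * (g (\<sigma> * z) * h z) \<partial>lborel)"
  have Tsplit: "std_normal_density z * (T (\<sigma> * z) * h z) = (\<Sum>i<n. (c i * \<sigma> ^ i) * (std_normal_density z * (z ^ i * poly (hep n) z)))" for z
    unfolding T_def h_def sum_distrib_left sum_distrib_right
    by (rule sum.cong[OF refl]) (simp add: power_mult_distrib algebra_simps)
  have Tint: "integrable lborel (\<lambda>z. std_normal_density z * (T (\<sigma> * z) * h z))"
    unfolding Tsplit by (intro Bochner_Integration.integrable_sum integrable_mult_right intg_ES)
  have T0: "(\<integral>z. std_normal_density z * (T (\<sigma> * z) * h z) \<partial>lborel) = 0"
  proof -
    have "(\<integral>z. std_normal_density z * (T (\<sigma> * z) * h z) \<partial>lborel) = (\<Sum>i<n. (c i * \<sigma> ^ i) * ES (hep n) i)"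
      unfolding Tsplit ES_def
      by (subst Bochner_Integration.integral_sum) (auto intro: integrable_mult_right intg_ES)
    also have "\<dots> = 0" by (simp add: hep_orth)
    finally show ?thesis .
  qed
  have hm: "h \<in> borel_measurable borel" unfolding h_def by measurable
  have rint: "integrable lborel (\<lambda>z. std_normal_density z * (r (\<sigma> * z) * h z))"
  proof (rule Bochner_Integration.integrable_bound[OF integrable_mult_right[OF intg_bnd[of N "hep n"], of "K / I ^ n"]])
    show "(\<lambda>z. std_normal_density z * (r (\<sigma> * z) * h z)) \<in> borel_measurable lborel"
      using rm hm by measurable
    show "AE z in lborel. norm (std_normal_density z * (r (\<sigma> * z) * h z)) \<le>
      norm (K / I ^ n * (std_normal_density z * ((1 + sqrt 2 * \<bar>z\<bar>) ^ N * \<bar>poly (hep n) z\<bar>)))"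
    proof (rule AE_I2)
      fix z
      have "\<bar>r (\<sigma> * z) * h z\<bar> \<le> K / I ^ n * ((1 + sqrt 2 * \<bar>z\<bar>) ^ N * \<bar>poly (hep n) z\<bar>)"
      proof -
        have "\<bar>r (\<sigma> * z)\<bar> * \<bar>poly (hep n) z\<bar> \<le> (K / I ^ n * (1 + sqrt 2 * \<bar>z\<bar>) ^ N) * \<bar>poly (hep n) z\<bar>"
          by (rule mult_right_mono[OF rb]) simp
        then show ?thesis unfolding h_def abs_mult by (simp only: mult.assoc)
      qed
      then have "std_normal_density z * \<bar>r (\<sigma> * z) * h z\<bar> \<le> std_normal_density z * (K / I ^ n * ((1 + sqrt 2 * \<bar>z\<bar>) ^ N * \<bar>poly (hep n) z\<bar>))"
        by (rule mult_left_mono) simp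
      then show "norm (std_normal_density z * (r (\<sigma> * z) * h z)) \<le>
        norm (K / I ^ n * (std_normal_density z * ((1 + sqrt 2 * \<bar>z\<bar>) ^ N * \<bar>poly (hep n) z\<bar>)))"
        using K0 I by (simp add: abs_mult algebra_simps)
    qed
  qed
  have Xs: "X = (\<integral>z. std_normal_density z * (r (\<sigma> * z) * h z) \<partial>lborel)"
  proof -
    have "X = (\<integral>z. std_normal_density z * (T (\<sigma> * z) * h z) + std_normal_density z * (r (\<sigma> * z) * h z) \<partial>lborel)"
      unfolding X_def r_def by (rule Bochner_Integration.integral_cong[OF refl]) (simp add: algebra_simps)
    also have "\<dots> = (\<integral>z. std_normal_density z * (r (\<sigma> * z) * h z) \<partial>lborel)"
      by (subst Bochner_Integration.integral_add[OF Tint rint]) (simp add: T0)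
    finally show ?thesis .
  qed
  have Xb: "\<bar>X\<bar> \<le> K / I ^ n * A"
  proof -
    have "\<bar>X\<bar> \<le> (\<integral>z. K / I ^ n * (std_normal_density z * ((1 + sqrt 2 * \<bar>z\<bar>) ^ N * \<bar>poly (hep n) z\<bar>)) \<partial>lborel)"
      unfolding Xs
    proof (rule integral_abs_bound_integral[OF rint integrable_mult_right[OF intg_bnd[of N "hep n"]]])
      fix z :: real
      have "\<bar>r (\<sigma> * z) * h z\<bar> \<le> K / I ^ n * ((1 + sqrt 2 * \<bar>z\<bar>) ^ N * \<bar>poly (hep n) z\<bar>)"
      proof -
        have "\<bar>r (\<sigma> * z)\<bar> * \<bar>poly (hep n) z\<bar> \<le> (K / I ^ n * (1 + sqrt 2 * \<bar>z\<bar>) ^ N) * \<bar>poly (hep n) z\<bar>"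
          by (rule mult_right_mono[OF rb]) simp
        then show ?thesis unfolding h_def abs_mult by (simp only: mult.assoc)
      qed
      then have "std_normal_density z * \<bar>r (\<sigma> * z) * h z\<bar> \<le> std_normal_density z * (K / I ^ n * ((1 + sqrt 2 * \<bar>z\<bar>) ^ N * \<bar>poly (hep n) z\<bar>))"
        by (rule mult_left_mono) simp
      then show "\<bar>std_normal_density z * (r (\<sigma> * z) * h z)\<bar> \<le> K / I ^ n * (std_normal_density z * ((1 + sqrt 2 * \<bar>z\<bar>) ^ N * \<bar>poly (hep n) z\<bar>))"
        by (simp add: abs_mult algebra_simps)
    qed
    also have "\<dots> = K / I ^ n * A" unfolding A_def by (rule integral_mult_right_zero)
    finally show ?thesis .
  qed
  have P: "P_proj k n s g = (\<sigma> ^ n * X) / (\<sigma> ^ n * \<sigma> ^ n * D)"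
    unfolding P_proj_def inner1 inner2 X_def ..
  show ?thesis
  proof (cases "D = 0")
    case True
    then show ?thesis unfolding P using K0 Kc_nonneg by simp
  next
    case False
    then have Dp: "D > 0" using D0 by simp
    have sn: "\<sigma> ^ n > 0" using s by simp
    have "\<bar>P_proj k n s g\<bar> = \<bar>X\<bar> / (\<sigma> ^ n * D)" unfolding P using sn Dp by (simp add: abs_mult abs_divide)
    also have "\<dots> \<le> (K / I ^ n * A) / (\<sigma> ^ n * D)"
      by (rule divide_right_mono[OF Xb]) (use sn Dp in simp)
    also have "\<dots> = K * (A / ((I * \<sigma>) ^ n * D))" using I s by (simp add: power_mult_distrib field_simps)
    also have "\<dots> = K * Kc n N" unfolding Kc sI ..
    finally show ?thesis .
  qed
qed




definition Ex :: "real \<Rightarrow> nat \<Rightarrow> (real \<Rightarrow> real) \<Rightarrow> real \<Rightarrow> nat \<Rightarrow> bool" where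
  "Ex I n f K N \<longleftrightarrow> (\<exists>c. \<forall>y. \<bar>f y - (\<Sum>i<n. c i * y ^ i)\<bar> \<le> K / I ^ n * (1 + I * \<bar>y\<bar>) ^ N)"

lemma Ex_K0: assumes "Ex I n f K N" "I > 0" shows "K \<ge> 0"
proof -
  obtain c where c: "\<And>y. \<bar>f y - (\<Sum>i<n. c i * y ^ i)\<bar> \<le> K / I ^ n * (1 + I * \<bar>y\<bar>) ^ N"
    using assms unfolding Ex_def by blast
  have "0 \<le> K / I ^ n * (1 + I * \<bar>0\<bar>) ^ N" using c[of 0] by (meson abs_ge_zero order_trans)
  then have "0 \<le> K / I ^ n" by simp
  moreover have "I ^ n > 0" using assms(2) by simp
  ultimately show ?thesis by (simp add: zero_le_divide_iff)
qed

lemma Ex_mono: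
  assumes "Ex I n f K N" "K \<le> K'" "N \<le> N'" "I > 0"
  shows "Ex I n f K' N'"
proof -
  have K0: "K \<ge> 0" by (rule Ex_K0[OF assms(1,4)])
  obtain c where c: "\<And>y. \<bar>f y - (\<Sum>i<n. c i * y ^ i)\<bar> \<le> K / I ^ n * (1 + I * \<bar>y\<bar>) ^ N"
    using assms unfolding Ex_def by blast
  have "\<bar>f y - (\<Sum>i<n. c i * y ^ i)\<bar> \<le> K' / I ^ n * (1 + I * \<bar>y\<bar>) ^ N'" for y
  proof -
    have t: "1 \<le> 1 + I * \<bar>y\<bar>" using assms(4) by simp
    have "(1 + I * \<bar>y\<bar>) ^ N \<le> (1 + I * \<bar>y\<bar>) ^ N'" by (rule power_increasing[OF assms(3) t])
    moreover have "K / I ^ n \<le> K' / I ^ n" using assms(2,4) by (simp add: divide_right_mono)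
    moreover have "0 \<le> K / I ^ n" using K0 assms(4) by simp
    moreover have "0 \<le> (1 + I * \<bar>y\<bar>) ^ N" using assms(4) by simp
    ultimately have "K / I ^ n * (1 + I * \<bar>y\<bar>) ^ N \<le> K' / I ^ n * (1 + I * \<bar>y\<bar>) ^ N'"
      by (intro mult_mono) auto
    then show ?thesis using c[of y] by linarith
  qed
  then show ?thesis unfolding Ex_def by blast
qed

lemma Ex_add:
  assumes "Ex I n f K1 N" "Ex I n g K2 N"
  shows "Ex I n (\<lambda>y. f y + g y) (K1 + K2) N"
proof -
  obtain c1 where c1: "\<And>y. \<bar>f y - (\<Sum>i<n. c1 i * y ^ i)\<bar> \<le> K1 / I ^ n * (1 + I * \<bar>y\<bar>) ^ N"
    using assms unfolding Ex_def by blast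
  obtain c2 where c2: "\<And>y. \<bar>g y - (\<Sum>i<n. c2 i * y ^ i)\<bar> \<le> K2 / I ^ n * (1 + I * \<bar>y\<bar>) ^ N"
    using assms unfolding Ex_def by blast
  have h: "\<bar>f y + g y - (\<Sum>i<n. (c1 i + c2 i) * y ^ i)\<bar> \<le> (K1 + K2) / I ^ n * (1 + I * \<bar>y\<bar>) ^ N" for y
  proof -
    have "f y + g y - (\<Sum>i<n. (c1 i + c2 i) * y ^ i) = (f y - (\<Sum>i<n. c1 i * y ^ i)) + (g y - (\<Sum>i<n. c2 i * y ^ i))"
      by (simp add: distrib_right sum.distrib)
    then show ?thesis using c1[of y] c2[of y] by (simp add: add_divide_distrib distrib_right)
  qed
  show ?thesis unfolding Ex_def by (rule exI[of _ "\<lambda>i. c1 i + c2 i"]) (use h in blast)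
qed

lemma Ex_scale:
  assumes "Ex I n f K N"
  shows "Ex I n (\<lambda>y. a * f y) (\<bar>a\<bar> * K) N"
proof -
  obtain c where c: "\<And>y. \<bar>f y - (\<Sum>i<n. c i * y ^ i)\<bar> \<le> K / I ^ n * (1 + I * \<bar>y\<bar>) ^ N"
    using assms unfolding Ex_def by blast
  have h: "\<bar>a * f y - (\<Sum>i<n. (a * c i) * y ^ i)\<bar> \<le> (\<bar>a\<bar> * K) / I ^ n * (1 + I * \<bar>y\<bar>) ^ N" for y
  proof -
    have "a * f y - (\<Sum>i<n. (a * c i) * y ^ i) = a * (f y - (\<Sum>i<n. c i * y ^ i))"
      by (simp add: sum_distrib_left algebra_simps)
    then have "\<bar>a * f y - (\<Sum>i<n. (a * c i) * y ^ i)\<bar> = \<bar>a\<bar> * \<bar>f y - (\<Sum>i<n. c i * y ^ i)\<bar>"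
      by (simp add: abs_mult)
    also have "\<dots> \<le> \<bar>a\<bar> * (K / I ^ n * (1 + I * \<bar>y\<bar>) ^ N)" by (rule mult_left_mono[OF c]) simp
    finally show ?thesis by simp
  qed
  show ?thesis unfolding Ex_def by (rule exI[of _ "\<lambda>i. a * c i"]) (use h in blast)
qed

lemma Ex_zero: "Ex I n (\<lambda>y. 0) 0 N"
  unfolding Ex_def by (rule exI[of _ "\<lambda>i. 0"]) simp

lemma Ex_sum:
  assumes "finite S" "\<And>j. j \<in> S \<Longrightarrow> Ex I n (f j) (K j) N"
  shows "Ex I n (\<lambda>y. \<Sum>j\<in>S. f j y) (\<Sum>j\<in>S. K j) N"
  using assms
proof (induction S rule: finite_induct)
  case empty
  then show ?case using Ex_zero by simp
next
  case (insert x F)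
  have "Ex I n (\<lambda>y. f x y + (\<Sum>j\<in>F. f j y)) (K x + (\<Sum>j\<in>F. K j)) N"
    by (rule Ex_add) (use insert in auto)
  then show ?case using insert by simp
qed

lemma Ex_cong: "Ex I n f K N \<Longrightarrow> (\<And>y. f y = g y) \<Longrightarrow> Ex I n g K N"
proof -
  assume "Ex I n f K N" "\<And>y. f y = g y"
  then have "f = g" by auto
  then show "Ex I n g K N" using \<open>Ex I n f K N\<close> by simp
qed

lemma Ex_direct: "(\<And>y. \<bar>f y\<bar> \<le> K / I ^ n * (1 + I * \<bar>y\<bar>) ^ N) \<Longrightarrow> Ex I n f K N"
  unfolding Ex_def by (rule exI[of _ "\<lambda>i. 0"]) simp

lemma pow_scale:
  fixes I y :: real
  assumes "I \<ge> 1" "n \<le> d"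
  shows "\<bar>y\<bar> ^ d \<le> 1 / I ^ n * (1 + I * \<bar>y\<bar>) ^ d"
proof -
  have I0: "I > 0" using assms by simp
  have "\<bar>y\<bar> ^ d * I ^ n \<le> \<bar>y\<bar> ^ d * I ^ d"
    by (rule mult_left_mono[OF power_increasing[OF assms(2,1)]]) simp
  also have "\<dots> = (I * \<bar>y\<bar>) ^ d" by (simp add: power_mult_distrib)
  also have "\<dots> \<le> (1 + I * \<bar>y\<bar>) ^ d" by (rule power_mono) (use I0 in auto)
  finally have "\<bar>y\<bar> ^ d * I ^ n \<le> (1 + I * \<bar>y\<bar>) ^ d" .
  then show ?thesis using I0 by (simp add: field_simps)
qed

lemma Ex_bound:
  assumes "I \<ge> 1" "n \<le> d" "\<And>y. \<bar>f y\<bar> \<le> B * \<bar>y\<bar> ^ d" "B \<ge> 0"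
  shows "Ex I n f B d"
proof (rule Ex_direct)
  fix y
  have "\<bar>f y\<bar> \<le> B * \<bar>y\<bar> ^ d" by (rule assms)
  also have "\<dots> \<le> B * (1 / I ^ n * (1 + I * \<bar>y\<bar>) ^ d)"
    by (rule mult_left_mono[OF pow_scale[OF assms(1,2)] assms(4)])
  finally show "\<bar>f y\<bar> \<le> B / I ^ n * (1 + I * \<bar>y\<bar>) ^ d" by simp
qed

lemma Ex_mon:
  assumes "I \<ge> 1"
  shows "Ex I n (\<lambda>y. y ^ d) 1 d"
proof (cases "d < n")
  case True
  have "(\<Sum>i<n. (if i = d then 1 else 0) * y ^ i) = y ^ d" for y :: real
  proof -
    have "(\<Sum>i<n. (if i = d then 1 else 0) * y ^ i) = (\<Sum>i<n. (if i = d then y ^ i else 0))"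
      by (rule sum.cong) auto
    also have "\<dots> = y ^ d" using True by (simp add: sum.delta)
    finally show ?thesis .
  qed
  then have "\<forall>y. \<bar>y ^ d - (\<Sum>i<n. (if i = d then 1 else 0) * y ^ i)\<bar> \<le> 1 / I ^ n * (1 + I * \<bar>y\<bar>) ^ d"
    using assms by simp
  then show ?thesis unfolding Ex_def by (intro exI[of _ "\<lambda>i. if i = d then 1 else 0"]) blast
next
  case False
  then show ?thesis by (intro Ex_bound[OF assms]) (auto simp: power_abs)
qed

lemma geo_aux:
  fixes c :: real
  assumes "c \<ge> 0" "j < m"
  shows "1 + c * (1 + c) ^ j \<le> (1 + c) ^ m"
proof -
  have "1 + c * (1 + c) ^ j \<le> (1 + c) ^ j + c * (1 + c) ^ j"
    using assms by (simp add: one_le_power)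
  also have "\<dots> = (1 + c) ^ Suc j" by (simp add: algebra_simps)
  also have "\<dots> \<le> (1 + c) ^ m" by (rule power_increasing) (use assms in auto)
  finally show ?thesis .
qed

lemma even_pow_nonneg: "(y::real) ^ (2 * k) \<ge> 0"
proof -
  have "y ^ (2 * k) = (y ^ k) ^ 2" by (metis mult.commute power_mult)
  then show ?thesis by simp
qed

lemma e_pos:
  fixes p b y :: real
  assumes "p > 1" "b > 0"
  shows "p - 1 + b * y ^ (2 * k) > 0"
proof -
  have "y ^ (2 * k) \<ge> 0" by (rule even_pow_nonneg)
  then show ?thesis using assms by (simp add: add_pos_nonneg)
qed

lemma e_bound:
  assumes "p > 1" "b > 0"
  shows "\<bar>e_b p k b y\<bar> \<le> 1 / (p - 1)"
proof -
  have "y ^ (2 * k) \<ge> 0" by (rule even_pow_nonneg)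
  then have "p - 1 \<le> p - 1 + b * y ^ (2 * k)" using assms by simp
  then show ?thesis unfolding e_b_def using e_pos[OF assms] assms
    by (simp add: frac_le)
qed

lemma e_ident:
  assumes "p > 1" "b > 0"
  shows "y ^ d * e_b p k b y = 1 / (p - 1) * y ^ d + (- (b / (p - 1))) * (y ^ (d + 2 * k) * e_b p k b y)"
proof -
  define u where "u = y ^ (2 * k)"
  define q where "q = p - 1"
  define e where "e = e_b p k b y"
  have q: "q > 0" unfolding q_def using assms by simp
  have pos: "q + b * u > 0" unfolding u_def q_def by (rule e_pos[OF assms])
  have ee: "e = 1 / (q + b * u)" unfolding e_b_def u_def e_def q_def ..
  have E: "q * e = 1 - b * u * e" unfolding ee using pos by (simp add: field_simps)
  have pw: "y ^ (d + 2 * k) = y ^ d * u" unfolding u_def by (simp add: power_add)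
  have "y ^ d * e = (y ^ d * (q * e)) / q" using q by simp
  also have "\<dots> = 1 / q * y ^ d + (- (b / q)) * (y ^ d * u * e)" unfolding E using q
    by (simp add: field_simps)
  finally show ?thesis unfolding pw e_def[symmetric] q_def[symmetric] by (simp add: ac_simps)
qed

lemma Ex_e:
  assumes "p > 1" "b > 0" "I \<ge> 1" "N \<ge> n + 2 * k" "d \<le> N" "k \<ge> 1"
  shows "Ex I n (\<lambda>y. y ^ d * e_b p k b y) (1 / (p - 1) * (1 + b / (p - 1)) ^ (n - d)) N"
  using assms(5)
proof (induction "n - d" arbitrary: d rule: less_induct)
  case less
  have I0: "I > 0" using assms by simp
  show ?case
  proof (cases "n \<le> d")
    case True
    have "Ex I n (\<lambda>y. y ^ d * e_b p k b y) (1 / (p - 1)) d"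
    proof (rule Ex_bound[OF assms(3) True])
      fix y
      show "\<bar>y ^ d * e_b p k b y\<bar> \<le> 1 / (p - 1) * \<bar>y\<bar> ^ d"
        using mult_left_mono[OF e_bound[OF assms(1,2), of k y], of "\<bar>y\<bar> ^ d"] by (simp add: abs_mult power_abs mult.commute)
    qed (use assms in simp)
    then show ?thesis by (rule Ex_mono) (use True less.prems I0 in auto)
  next
    case False
    then have lt: "n - (d + 2 * k) < n - d" using assms(6) by simp
    have dN: "d + 2 * k \<le> N" using False assms(4) by simp
    have IH: "Ex I n (\<lambda>y. y ^ (d + 2 * k) * e_b p k b y) (1 / (p - 1) * (1 + b / (p - 1)) ^ (n - (d + 2 * k))) N"
      by (rule less.hyps[OF lt dN])
    have m: "Ex I n (\<lambda>y. y ^ d) 1 N" by (rule Ex_mono[OF Ex_mon[OF assms(3)]]) (use less.prems I0 in auto)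
    have c0: "b / (p - 1) \<ge> 0" using assms by simp
    have "Ex I n (\<lambda>y. 1 / (p - 1) * y ^ d + (- (b / (p - 1))) * (y ^ (d + 2 * k) * e_b p k b y))
       (\<bar>1 / (p - 1)\<bar> * 1 + \<bar>- (b / (p - 1))\<bar> * (1 / (p - 1) * (1 + b / (p - 1)) ^ (n - (d + 2 * k)))) N"
      by (intro Ex_add Ex_scale m IH)
    then have "Ex I n (\<lambda>y. y ^ d * e_b p k b y)
       (\<bar>1 / (p - 1)\<bar> * 1 + \<bar>- (b / (p - 1))\<bar> * (1 / (p - 1) * (1 + b / (p - 1)) ^ (n - (d + 2 * k)))) N"
      by (rule Ex_cong) (rule e_ident[OF assms(1,2), symmetric])
    moreover have "\<bar>1 / (p - 1)\<bar> * 1 + \<bar>- (b / (p - 1))\<bar> * (1 / (p - 1) * (1 + b / (p - 1)) ^ (n - (d + 2 * k)))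
        \<le> 1 / (p - 1) * (1 + b / (p - 1)) ^ (n - d)"
    proof -
      have "1 + b / (p - 1) * (1 + b / (p - 1)) ^ (n - (d + 2 * k)) \<le> (1 + b / (p - 1)) ^ (n - d)"
        by (rule geo_aux[OF c0 lt])
      then have "1 / (p - 1) * (1 + b / (p - 1) * (1 + b / (p - 1)) ^ (n - (d + 2 * k))) \<le> 1 / (p - 1) * (1 + b / (p - 1)) ^ (n - d)"
        by (rule mult_left_mono) (use assms in simp)
      then show ?thesis using assms by (simp add: algebra_simps)
    qed
    ultimately show ?thesis by (rule Ex_mono) (use I0 in auto)
  qed
qed




lemma snorm_bound:
  assumes "snorm p k s g \<le> ereal c"
  shows "\<bar>g y\<bar> \<le> c * (I_s k s powr (- M_exp p k) + \<bar>y\<bar> powr M_exp p k)"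
proof -
  have "ereal (\<bar>g y\<bar> / (I_s k s powr (- M_exp p k) + \<bar>y\<bar> powr M_exp p k)) \<le> ereal c"
    using assms unfolding snorm_def by (simp add: SUP_le_iff)
  then have h: "\<bar>g y\<bar> / (I_s k s powr (- M_exp p k) + \<bar>y\<bar> powr M_exp p k) \<le> c" by simp
  have "I_s k s \<noteq> 0" using I_s_pos[of k s] by simp
  then have "I_s k s powr (- M_exp p k) > 0" by simp
  then have "I_s k s powr (- M_exp p k) + \<bar>y\<bar> powr M_exp p k > 0" by (simp add: add_pos_nonneg)
  then show ?thesis using h by (simp add: divide_le_eq mult.commute)
qed

lemma M_pos: "p > 1 \<Longrightarrow> k \<ge> 1 \<Longrightarrow> M_exp p k > 0"
  unfolding M_exp_def by simp

lemma n_le_M: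
  assumes "p > 1" "k \<ge> 1" "n \<le> M_floor p k"
  shows "real n \<le> M_exp p k"
proof -
  have M: "M_exp p k > 0" by (rule M_pos[OF assms(1,2)])
  have "real n \<le> real (M_floor p k)" using assms(3) by simp
  also have "\<dots> = of_int (\<lceil>M_exp p k\<rceil> - 1)" unfolding M_floor_def using M by simp
  also have "\<dots> \<le> M_exp p k" by linarith
  finally show ?thesis .
qed

lemma P3_pow:
  fixes I y M :: real
  assumes I: "I \<ge> 1" and nM: "real n \<le> M" and M: "M \<ge> 0" and N: "N \<ge> j + nat \<lceil>M\<rceil>"
  shows "\<bar>y\<bar> ^ j * (I powr (- M) + \<bar>y\<bar> powr M) \<le> 2 / I ^ n * (1 + I * \<bar>y\<bar>) ^ N"
proof -
  define t where "t = I * \<bar>y\<bar>"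
  have I0: "I > 0" using I by simp
  have t0: "t \<ge> 0" unfolding t_def using I0 by simp
  have yt: "\<bar>y\<bar> \<le> t" unfolding t_def using I by (simp add: mult_le_cancel_right1)
  have y: "\<bar>y\<bar> = t / I" unfolding t_def using I0 by simp
  have a: "\<bar>y\<bar> ^ j \<le> (1 + t) ^ j" by (rule power_mono) (use yt t0 in auto)
  have b: "I powr (- M) + \<bar>y\<bar> powr M = I powr (- M) * (1 + t powr M)"
    unfolding y using I0 t0 by (simp add: powr_divide powr_minus field_simps)
  have c: "I powr (- M) \<le> 1 / I ^ n"
  proof -
    have "I powr (- M) \<le> I powr (- real n)" by (rule powr_mono) (use nM I in auto)
    also have "\<dots> = 1 / I ^ n" using I0 by (simp add: powr_minus powr_realpow divide_inverse)
    finally show ?thesis .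
  qed
  have d: "1 + t powr M \<le> 2 * (1 + t) ^ nat \<lceil>M\<rceil>"
  proof -
    have "t powr M \<le> (1 + t) powr M" by (rule powr_mono2) (use M t0 in auto)
    also have "\<dots> \<le> (1 + t) powr (real (nat \<lceil>M\<rceil>))"
    proof (rule powr_mono)
      show "M \<le> real (nat \<lceil>M\<rceil>)" using M by linarith
    qed (use t0 in auto)
    also have "\<dots> = (1 + t) ^ nat \<lceil>M\<rceil>" using t0 by (simp add: powr_realpow)
    finally have "t powr M \<le> (1 + t) ^ nat \<lceil>M\<rceil>" .
    moreover have "1 \<le> (1 + t) ^ nat \<lceil>M\<rceil>" using t0 by (simp add: one_le_power)
    ultimately show ?thesis by simp
  qed
  have "\<bar>y\<bar> ^ j * (I powr (- M) + \<bar>y\<bar> powr M) = \<bar>y\<bar> ^ j * I powr (- M) * (1 + t powr M)"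
    unfolding b by simp
  also have "\<dots> \<le> (1 + t) ^ j * (1 / I ^ n) * (2 * (1 + t) ^ nat \<lceil>M\<rceil>)"
    by (intro mult_mono a c d) (use t0 I0 in auto)
  also have "\<dots> = 2 / I ^ n * (1 + t) ^ (j + nat \<lceil>M\<rceil>)" by (simp add: power_add)
  also have "\<dots> \<le> 2 / I ^ n * (1 + t) ^ N"
    by (rule mult_left_mono[OF power_increasing[OF N]]) (use t0 I0 in auto)
  finally show ?thesis unfolding t_def .
qed

lemma ye_bound:
  assumes "p > 1" "b > 0"
  shows "\<bar>y ^ (2 * k) * e_b p k b y\<bar> \<le> 1 / b"
proof -
  have u: "y ^ (2 * k) \<ge> 0" by (rule even_pow_nonneg)
  have pos: "p - 1 + b * y ^ (2 * k) > 0" by (rule e_pos[OF assms])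
  have "y ^ (2 * k) * e_b p k b y = y ^ (2 * k) / (p - 1 + b * y ^ (2 * k))" unfolding e_b_def by simp
  also have "\<dots> \<le> 1 / b" using pos assms u by (simp add: divide_simps)
  finally have "y ^ (2 * k) * e_b p k b y \<le> 1 / b" .
  moreover have "y ^ (2 * k) * e_b p k b y \<ge> 0" unfolding e_b_def using u pos by simp
  ultimately show ?thesis by simp
qed

lemma W_bound:
  assumes "p > 1" "b > 0" "k \<ge> 1" "a \<ge> 0"
  shows "\<bar>(a * A3) * y ^ (2 * k - 2) + (a * A4) * (y ^ (4 * k - 2) * e_b p k b y)\<bar>
     \<le> a * (\<bar>A3\<bar> + \<bar>A4\<bar> / b) * \<bar>y\<bar> ^ (2 * k - 2)"
proof -
  have e: "y ^ (4 * k - 2) = y ^ (2 * k - 2) * y ^ (2 * k)" using assms(3)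
    by (simp add: power_add[symmetric])
  have "\<bar>(a * A4) * (y ^ (4 * k - 2) * e_b p k b y)\<bar> = a * \<bar>A4\<bar> * \<bar>y\<bar> ^ (2 * k - 2) * \<bar>y ^ (2 * k) * e_b p k b y\<bar>"
    unfolding e using assms(4) by (simp add: abs_mult power_abs mult.assoc)
  also have "\<dots> \<le> a * \<bar>A4\<bar> * \<bar>y\<bar> ^ (2 * k - 2) * (1 / b)"
    by (rule mult_left_mono[OF ye_bound[OF assms(1,2)]]) (use assms in simp)
  finally have 1: "\<bar>(a * A4) * (y ^ (4 * k - 2) * e_b p k b y)\<bar> \<le> a * \<bar>A4\<bar> * \<bar>y\<bar> ^ (2 * k - 2) * (1 / b)" .
  have 2: "\<bar>(a * A3) * y ^ (2 * k - 2)\<bar> = a * \<bar>A3\<bar> * \<bar>y\<bar> ^ (2 * k - 2)"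
    using assms(4) by (simp add: abs_mult power_abs)
  have "\<bar>(a * A3) * y ^ (2 * k - 2) + (a * A4) * (y ^ (4 * k - 2) * e_b p k b y)\<bar>
      \<le> a * \<bar>A3\<bar> * \<bar>y\<bar> ^ (2 * k - 2) + a * \<bar>A4\<bar> * \<bar>y\<bar> ^ (2 * k - 2) * (1 / b)"
    using 1 2 by (smt (verit) abs_triangle_ineq)
  also have "\<dots> = a * (\<bar>A3\<bar> + \<bar>A4\<bar> / b) * \<bar>y\<bar> ^ (2 * k - 2)" by (simp add: algebra_simps)
  finally show ?thesis .
qed




definition hc :: "nat \<Rightarrow> nat \<Rightarrow> real" where
  "hc m l = fact m / (fact l * fact (m - 2 * l))"

lemma hc_nonneg: "hc m l \<ge> 0" unfolding hc_def by simp

lemma R_decomp: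
  fixes k :: nat and s b p y :: real and q :: "real \<Rightarrow> real"
  assumes k: "k \<ge> 1"
  defines "a \<equiv> I_s k s powr (-2)"
    and "al1 \<equiv> - 2 * real k * (2 * real k - 1) * b / (p - 1)"
    and "al2 \<equiv> 4 * p * (real k)^2 * b^2 / (p - 1)^2"
    and "al3 \<equiv> - 2 * p * real k * (2 * real k - 1) * b / (p - 1)"
    and "al4 \<equiv> 4 * p * (2 * p - 1) * (real k)^2 * b^2 / (p - 1)^2"
  shows "R_op p k s b q y =
     ((a * al1) * y ^ (2 * k - 2) + (a * al2) * (y ^ (4 * k - 2) * e_b p k b y))
   + (\<Sum>m = 0..M_floor p k. \<Sum>l = 0..m div 2. (P_proj k m s q * hc m l * (- a) ^ l) *
        ((a * al3) * y ^ (2 * k - 2 + (m - 2 * l)) + (a * al4) * (y ^ (4 * k - 2 + (m - 2 * l)) * e_b p k b y)))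
   + ((a * al3) * y ^ (2 * k - 2) + (a * al4) * (y ^ (4 * k - 2) * e_b p k b y)) * q_minus p k s q y"
proof -
  define e where "e = e_b p k b y"
  define W where "W = (a * al3) * y ^ (2 * k - 2) + (a * al4) * (y ^ (4 * k - 2) * e)"
  have p4: "y ^ (4 * k - 2) = y ^ (2 * k - 2) * y ^ (2 * k)" using k by (simp add: power_add[symmetric])
  have R: "R_op p k s b q y = ((a * al1) * y ^ (2 * k - 2) + (a * al2) * (y ^ (4 * k - 2) * e)) + W * q y"
    unfolding R_op_def Let_def W_def p4 e_def a_def al1_def al2_def al3_def al4_def
    by (simp add: algebra_simps)
  have qy: "q y = (\<Sum>m = 0..M_floor p k. P_proj k m s q * H_poly k m s y) + q_minus p k s q y"
    unfolding q_minus_def by simp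
  have WH: "W * H_poly k m s y = (\<Sum>l = 0..m div 2. hc m l * (- a) ^ l *
        ((a * al3) * y ^ (2 * k - 2 + (m - 2 * l)) + (a * al4) * (y ^ (4 * k - 2 + (m - 2 * l)) * e)))" for m
    unfolding H_poly_def sum_distrib_left a_def[symmetric]
  proof (rule sum.cong[OF refl])
    fix l
    have e1: "y ^ (2 * k - 2 + (m - 2 * l)) = y ^ (2 * k - 2) * y ^ (m - 2 * l)" by (rule power_add)
    have e2: "y ^ (4 * k - 2 + (m - 2 * l)) = y ^ (4 * k - 2) * y ^ (m - 2 * l)" by (rule power_add)
    show "W * (fact m / (fact l * fact (m - 2 * l)) * (- a) ^ l * y ^ (m - 2 * l)) =
      hc m l * (- a) ^ l * ((a * al3) * y ^ (2 * k - 2 + (m - 2 * l)) + (a * al4) * (y ^ (4 * k - 2 + (m - 2 * l)) * e))"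
      unfolding e1 e2 W_def hc_def by (simp add: algebra_simps)
  qed
  have "W * q y = (\<Sum>m = 0..M_floor p k. P_proj k m s q * (W * H_poly k m s y)) + W * q_minus p k s q y"
    unfolding qy by (simp add: distrib_left sum_distrib_left algebra_simps)
  also have "\<dots> = (\<Sum>m = 0..M_floor p k. \<Sum>l = 0..m div 2. (P_proj k m s q * hc m l * (- a) ^ l) *
        ((a * al3) * y ^ (2 * k - 2 + (m - 2 * l)) + (a * al4) * (y ^ (4 * k - 2 + (m - 2 * l)) * e))) + W * q_minus p k s q y"
    unfolding WH sum_distrib_left by (simp add: algebra_simps)
  finally show ?thesis unfolding R W_def e_def by simp
qed

definition N0 :: "real \<Rightarrow> nat \<Rightarrow> nat" where
  "N0 p k = 4 * k + M_floor p k + nat \<lceil>M_exp p k\<rceil>"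

definition KE :: "real \<Rightarrow> nat \<Rightarrow> real \<Rightarrow> real" where
  "KE p k b0 = 1 / (p - 1) * (1 + 2 * b0 / (p - 1)) ^ M_floor p k"

lemma Ex_ym:
  assumes "I \<ge> 1" "d \<le> N0 p k"
  shows "Ex I n (\<lambda>y. y ^ d) 1 (N0 p k)"
  by (rule Ex_mono[OF Ex_mon[OF assms(1)]]) (use assms in auto)

lemma Ex_ye:
  assumes "p > 1" "k \<ge> 1" "I \<ge> 1" "d \<le> N0 p k" "n \<le> M_floor p k" "0 < b" "b \<le> 2 * b0"
  shows "Ex I n (\<lambda>y. y ^ d * e_b p k b y) (KE p k b0) (N0 p k)"
proof (rule Ex_mono[OF Ex_e[OF assms(1,6,3) _ assms(4,2)]])
  show "n + 2 * k \<le> N0 p k" using assms unfolding N0_def by simp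
  have c: "0 \<le> b / (p - 1)" "b / (p - 1) \<le> 2 * b0 / (p - 1)" using assms by (auto simp: divide_right_mono)
  have "(1 + b / (p - 1)) ^ (n - d) \<le> (1 + 2 * b0 / (p - 1)) ^ (n - d)"
    by (rule power_mono) (use c in auto)
  also have "\<dots> \<le> (1 + 2 * b0 / (p - 1)) ^ M_floor p k"
    by (rule power_increasing) (use assms c in auto)
  finally show "1 / (p - 1) * (1 + b / (p - 1)) ^ (n - d) \<le> KE p k b0"
    unfolding KE_def by (rule mult_left_mono) (use assms in simp)
qed (use assms in auto)




definition A1 :: "real \<Rightarrow> nat \<Rightarrow> real \<Rightarrow> real" where "A1 p k b0 = 2 * real k * (2 * real k - 1) / (p - 1) * (2 * b0)"
definition A2 :: "real \<Rightarrow> nat \<Rightarrow> real \<Rightarrow> real" where "A2 p k b0 = 4 * p * (real k)^2 / (p - 1)^2 * (2 * b0)^2"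
definition A3 :: "real \<Rightarrow> nat \<Rightarrow> real \<Rightarrow> real" where "A3 p k b0 = 2 * p * real k * (2 * real k - 1) / (p - 1) * (2 * b0)"
definition A4 :: "real \<Rightarrow> nat \<Rightarrow> real \<Rightarrow> real" where "A4 p k b0 = 4 * p * (2 * p - 1) * (real k)^2 / (p - 1)^2 * (2 * b0)^2"
definition A4b :: "real \<Rightarrow> nat \<Rightarrow> real \<Rightarrow> real" where "A4b p k b0 = 4 * p * (2 * p - 1) * (real k)^2 / (p - 1)^2 * (2 * b0)"
definition HS :: "real \<Rightarrow> nat \<Rightarrow> real" where "HS p k = (\<Sum>m = 0..M_floor p k. \<Sum>l = 0..m div 2. hc m l)"
definition C0 :: "real \<Rightarrow> nat \<Rightarrow> real \<Rightarrow> real" where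
  "C0 p k b0 = A1 p k b0 + A2 p k b0 * KE p k b0 + HS p k * (A3 p k b0 + A4 p k b0 * KE p k b0) + 2 * (A3 p k b0 + A4b p k b0)"

lemma absb: "(c::real) \<ge> 0 \<Longrightarrow> 0 < b \<Longrightarrow> b \<le> B \<Longrightarrow> \<bar>c * b\<bar> \<le> c * B"
  by (simp add: abs_mult mult_left_mono)

lemma absb2: "(c::real) \<ge> 0 \<Longrightarrow> 0 < b \<Longrightarrow> b \<le> B \<Longrightarrow> \<bar>c * b ^ 2\<bar> \<le> c * B ^ 2"
  by (simp add: abs_mult mult_left_mono power_mono)

lemma al_bounds:
  assumes p: "p > 1" and k: "k \<ge> 1" and b: "0 < b" "b \<le> 2 * b0"
  shows "\<bar>- 2 * real k * (2 * real k - 1) * b / (p - 1)\<bar> \<le> A1 p k b0"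
    "\<bar>4 * p * (real k)^2 * b^2 / (p - 1)^2\<bar> \<le> A2 p k b0"
    "\<bar>- 2 * p * real k * (2 * real k - 1) * b / (p - 1)\<bar> \<le> A3 p k b0"
    "\<bar>4 * p * (2 * p - 1) * (real k)^2 * b^2 / (p - 1)^2\<bar> \<le> A4 p k b0"
    "\<bar>4 * p * (2 * p - 1) * (real k)^2 * b^2 / (p - 1)^2\<bar> / b \<le> A4b p k b0"
proof -
  have k1: "2 * real k - 1 \<ge> 0" using k by simp
  have p1: "p - 1 > 0" "2 * p - 1 > 0" using p by auto
  have "\<bar>- 2 * real k * (2 * real k - 1) * b / (p - 1)\<bar> = \<bar>(2 * real k * (2 * real k - 1) / (p - 1)) * b\<bar>"
    by (simp add: abs_minus_commute)
  also have "\<dots> \<le> A1 p k b0" unfolding A1_def by (rule absb) (use k1 p1 b in auto)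
  finally show "\<bar>- 2 * real k * (2 * real k - 1) * b / (p - 1)\<bar> \<le> A1 p k b0" .
  have "\<bar>4 * p * (real k)^2 * b^2 / (p - 1)^2\<bar> = \<bar>(4 * p * (real k)^2 / (p - 1)^2) * b^2\<bar>" by simp
  also have "\<dots> \<le> A2 p k b0" unfolding A2_def by (rule absb2) (use p b in auto)
  finally show "\<bar>4 * p * (real k)^2 * b^2 / (p - 1)^2\<bar> \<le> A2 p k b0" .
  have "\<bar>- 2 * p * real k * (2 * real k - 1) * b / (p - 1)\<bar> = \<bar>(2 * p * real k * (2 * real k - 1) / (p - 1)) * b\<bar>"
    by (simp add: abs_minus_commute)
  also have "\<dots> \<le> A3 p k b0" unfolding A3_def by (rule absb) (use k1 p1 p b in auto)
  finally show "\<bar>- 2 * p * real k * (2 * real k - 1) * b / (p - 1)\<bar> \<le> A3 p k b0" .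
  have "\<bar>4 * p * (2 * p - 1) * (real k)^2 * b^2 / (p - 1)^2\<bar> = \<bar>(4 * p * (2 * p - 1) * (real k)^2 / (p - 1)^2) * b^2\<bar>" by simp
  also have "\<dots> \<le> A4 p k b0" unfolding A4_def by (rule absb2) (use p1 p b in auto)
  finally show "\<bar>4 * p * (2 * p - 1) * (real k)^2 * b^2 / (p - 1)^2\<bar> \<le> A4 p k b0" .
  have "\<bar>4 * p * (2 * p - 1) * (real k)^2 * b^2 / (p - 1)^2\<bar> / b = \<bar>(4 * p * (2 * p - 1) * (real k)^2 / (p - 1)^2) * b\<bar>"
    using b by (simp add: power2_eq_square abs_mult)
  also have "\<dots> \<le> A4b p k b0" unfolding A4b_def by (rule absb) (use p1 p b in auto)
  finally show "\<bar>4 * p * (2 * p - 1) * (real k)^2 * b^2 / (p - 1)^2\<bar> / b \<le> A4b p k b0" .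
qed

lemma A_nonneg:
  assumes "p > 1" "k \<ge> 1" "b0 > 0"
  shows "A1 p k b0 \<ge> 0" "A2 p k b0 \<ge> 0" "A3 p k b0 \<ge> 0" "A4 p k b0 \<ge> 0" "A4b p k b0 \<ge> 0"
    "KE p k b0 \<ge> 0" "HS p k \<ge> 0"
  using assms unfolding A1_def A2_def A3_def A4_def A4b_def KE_def HS_def
  by (auto intro!: mult_nonneg_nonneg divide_nonneg_nonneg sum_nonneg hc_nonneg)

lemma C0_nonneg: "p > 1 \<Longrightarrow> k \<ge> 1 \<Longrightarrow> b0 > 0 \<Longrightarrow> C0 p k b0 \<ge> 0"
  using A_nonneg[of p k b0] unfolding C0_def by (simp add: add_nonneg_nonneg)




lemma Ex_R:
  assumes p: "p > 1" and k: "k \<ge> 2" and b0: "b0 > 0" and I1: "I_s k s \<ge> 1"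
    and d0: "0 < \<delta>" and d1: "\<delta> \<le> 1" and V: "in_V p k \<delta> b0 s q b" and n: "n \<le> M_floor p k"
  shows "Ex (I_s k s) n (R_op p k s b q) (C0 p k b0 * I_s k s powr (- 2 * \<delta>)) (N0 p k)"
proof -
  define I where "I = I_s k s"
  define a where "a = I powr (-2)"
  define Mf where "Mf = M_floor p k"
  define N where "N = N0 p k"
  define al1 where "al1 = - 2 * real k * (2 * real k - 1) * b / (p - 1)"
  define al2 where "al2 = 4 * p * (real k)^2 * b^2 / (p - 1)^2"
  define al3 where "al3 = - 2 * p * real k * (2 * real k - 1) * b / (p - 1)"
  define al4 where "al4 = 4 * p * (2 * p - 1) * (real k)^2 * b^2 / (p - 1)^2"
  define KEc where "KEc = KE p k b0"
  have k1: "k \<ge> 1" using k by simp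
  have I1': "I \<ge> 1" and I0: "I > 0" using I1 unfolding I_def by auto
  have qproj: "\<And>m. m \<le> Mf \<Longrightarrow> m \<noteq> 2 * k \<Longrightarrow> \<bar>P_proj k m s q\<bar> \<le> I powr (- \<delta>)"
    and q2k: "\<bar>P_proj k (2 * k) s q\<bar> \<le> I powr (- 2 * \<delta>)"
    and sn: "snorm p k s (q_minus p k s q) \<le> ereal (I powr (- \<delta>))"
    and bb: "b0 / 2 \<le> b" "b \<le> 2 * b0"
    using V unfolding in_V_def I_def Mf_def by auto
  have b: "0 < b" "b \<le> 2 * b0" using bb b0 by auto
  have a0: "a \<ge> 0" unfolding a_def by simp
  have a1: "a \<le> 1"
  proof -
    have "I powr (-2) \<le> I powr 0" by (rule powr_mono) (use I1' in auto)
    then show ?thesis unfolding a_def using I0 by simp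
  qed
  have ad: "a \<le> I powr (- 2 * \<delta>)" unfolding a_def by (rule powr_mono) (use I1' d1 in auto)
  have ad2: "a * I powr (- \<delta>) \<le> I powr (- 2 * \<delta>)"
  proof -
    have "a * I powr (- \<delta>) = I powr (-2 + - \<delta>)" unfolding a_def by (rule powr_add[symmetric])
    also have "\<dots> \<le> I powr (- 2 * \<delta>)" by (rule powr_mono) (use I1' d1 in auto)
    finally show ?thesis .
  qed
  have qb: "\<bar>P_proj k m s q\<bar> \<le> I powr (- \<delta>)" if "m \<le> Mf" for m
  proof (cases "m = 2 * k")
    case True
    have "I powr (- 2 * \<delta>) \<le> I powr (- \<delta>)" by (rule powr_mono) (use I1' d0 in auto)
    then show ?thesis using q2k True by simp
  qed (use qproj that in auto)
  have AB: "\<bar>al1\<bar> \<le> A1 p k b0" "\<bar>al2\<bar> \<le> A2 p k b0" "\<bar>al3\<bar> \<le> A3 p k b0" "\<bar>al4\<bar> \<le> A4 p k b0"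
      "\<bar>al4\<bar> / b \<le> A4b p k b0"
    unfolding al1_def al2_def al3_def al4_def using al_bounds[OF p k1 b] by auto
  have An: "A1 p k b0 \<ge> 0" "A2 p k b0 \<ge> 0" "A3 p k b0 \<ge> 0" "A4 p k b0 \<ge> 0" "A4b p k b0 \<ge> 0"
      "KEc \<ge> 0" "HS p k \<ge> 0"
    using A_nonneg[OF p k1 b0] unfolding KEc_def by auto
  have nMf: "n \<le> Mf" using n unfolding Mf_def .
  have NMf: "N = 4 * k + Mf + nat \<lceil>M_exp p k\<rceil>" unfolding N_def N0_def Mf_def ..
  have ym: "Ex I n (\<lambda>y. y ^ d) 1 N" if "d \<le> N" for d
    unfolding N_def by (rule Ex_ym) (use I1' that N_def in auto)
  have ye: "Ex I n (\<lambda>y. y ^ d * e_b p k b y) KEc N" if "d \<le> N" for d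
    unfolding N_def KEc_def by (rule Ex_ye) (use p k1 I1' that N_def n b in auto)
  have E1: "Ex I n (\<lambda>y. (a * al1) * y ^ (2 * k - 2) + (a * al2) * (y ^ (4 * k - 2) * e_b p k b y))
      (a * (A1 p k b0 + A2 p k b0 * KEc)) N"
  proof (rule Ex_mono[OF Ex_add[OF Ex_scale[OF ym] Ex_scale[OF ye]]])
    show "2 * k - 2 \<le> N" "4 * k - 2 \<le> N" unfolding NMf by auto
    have "\<bar>a * al1\<bar> \<le> a * A1 p k b0" using AB a0 by (simp add: abs_mult mult_left_mono)
    moreover have "\<bar>a * al2\<bar> * KEc \<le> a * A2 p k b0 * KEc"
      using AB a0 An by (simp add: abs_mult mult_left_mono mult_right_mono)
    ultimately show "\<bar>a * al1\<bar> * 1 + \<bar>a * al2\<bar> * KEc \<le> a * (A1 p k b0 + A2 p k b0 * KEc)"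
      by (simp add: algebra_simps)
  qed (use I0 in auto)
  have EW: "Ex I n (\<lambda>y. (a * al3) * y ^ (2 * k - 2 + j) + (a * al4) * (y ^ (4 * k - 2 + j) * e_b p k b y))
      (a * (A3 p k b0 + A4 p k b0 * KEc)) N" if "j \<le> Mf" for j
  proof (rule Ex_mono[OF Ex_add[OF Ex_scale[OF ym] Ex_scale[OF ye]]])
    show "2 * k - 2 + j \<le> N" "4 * k - 2 + j \<le> N" unfolding NMf using that by auto
    have "\<bar>a * al3\<bar> \<le> a * A3 p k b0" using AB a0 by (simp add: abs_mult mult_left_mono)
    moreover have "\<bar>a * al4\<bar> * KEc \<le> a * A4 p k b0 * KEc"
      using AB a0 An by (simp add: abs_mult mult_left_mono mult_right_mono)
    ultimately show "\<bar>a * al3\<bar> * 1 + \<bar>a * al4\<bar> * KEc \<le> a * (A3 p k b0 + A4 p k b0 * KEc)"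
      by (simp add: algebra_simps)
  qed (use I0 in auto)
  define KW where "KW = a * (A3 p k b0 + A4 p k b0 * KEc)"
  have KW0: "KW \<ge> 0" unfolding KW_def using a0 An by simp
  have E2: "Ex I n (\<lambda>y. \<Sum>m = 0..Mf. \<Sum>l = 0..m div 2. (P_proj k m s q * hc m l * (- a) ^ l) *
        ((a * al3) * y ^ (2 * k - 2 + (m - 2 * l)) + (a * al4) * (y ^ (4 * k - 2 + (m - 2 * l)) * e_b p k b y)))
      (\<Sum>m = 0..Mf. \<Sum>l = 0..m div 2. I powr (- \<delta>) * KW * hc m l) N"
  proof (rule Ex_sum, simp, rule Ex_sum, simp)
    fix m l assume m: "m \<in> {0..Mf}" and l: "l \<in> {0..m div 2}"
    have jm: "m - 2 * l \<le> Mf" using m by auto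
    show "Ex I n (\<lambda>y. (P_proj k m s q * hc m l * (- a) ^ l) *
        ((a * al3) * y ^ (2 * k - 2 + (m - 2 * l)) + (a * al4) * (y ^ (4 * k - 2 + (m - 2 * l)) * e_b p k b y)))
      (I powr (- \<delta>) * KW * hc m l) N"
    proof (rule Ex_mono[OF Ex_scale[OF EW[OF jm]]])
      have "\<bar>(- a) ^ l\<bar> \<le> 1" using a0 a1 by (simp add: power_abs power_le_one)
      then have "\<bar>P_proj k m s q * hc m l * (- a) ^ l\<bar> \<le> I powr (- \<delta>) * hc m l * 1"
        unfolding abs_mult using qb[of m] m hc_nonneg[of m l]
        by (intro mult_mono) (auto simp: abs_of_nonneg)
      then show "\<bar>P_proj k m s q * hc m l * (- a) ^ l\<bar> * (a * (A3 p k b0 + A4 p k b0 * KEc)) \<le> I powr (- \<delta>) * KW * hc m l"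
      proof -
        have "\<bar>P_proj k m s q * hc m l * (- a) ^ l\<bar> * KW \<le> (I powr (- \<delta>) * hc m l * 1) * KW"
          by (rule mult_right_mono[OF \<open>\<bar>P_proj k m s q * hc m l * (- a) ^ l\<bar> \<le> I powr (- \<delta>) * hc m l * 1\<close> KW0])
        then show ?thesis unfolding KW_def[symmetric] by (simp add: ac_simps)
      qed
    qed (use I0 in auto)
  qed
  have E3: "Ex I n (\<lambda>y. ((a * al3) * y ^ (2 * k - 2) + (a * al4) * (y ^ (4 * k - 2) * e_b p k b y)) * q_minus p k s q y)
      (2 * (a * (A3 p k b0 + A4b p k b0)) * I powr (- \<delta>)) N"
  proof (rule Ex_direct)
    fix y
    define Mx where "Mx = M_exp p k"
    have W: "\<bar>(a * al3) * y ^ (2 * k - 2) + (a * al4) * (y ^ (4 * k - 2) * e_b p k b y)\<bar>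
        \<le> a * (A3 p k b0 + A4b p k b0) * \<bar>y\<bar> ^ (2 * k - 2)"
    proof -
      have "\<bar>(a * al3) * y ^ (2 * k - 2) + (a * al4) * (y ^ (4 * k - 2) * e_b p k b y)\<bar>
          \<le> a * (\<bar>al3\<bar> + \<bar>al4\<bar> / b) * \<bar>y\<bar> ^ (2 * k - 2)" by (rule W_bound[OF p b(1) k1 a0])
      also have "\<dots> \<le> a * (A3 p k b0 + A4b p k b0) * \<bar>y\<bar> ^ (2 * k - 2)"
        using AB a0 by (intro mult_right_mono mult_left_mono add_mono) auto
      finally show ?thesis .
    qed
    have Q: "\<bar>q_minus p k s q y\<bar> \<le> I powr (- \<delta>) * (I powr (- Mx) + \<bar>y\<bar> powr Mx)"
      using snorm_bound[OF sn, of y] unfolding I_def Mx_def .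
    have P: "\<bar>y\<bar> ^ (2 * k - 2) * (I powr (- Mx) + \<bar>y\<bar> powr Mx) \<le> 2 / I ^ n * (1 + I * \<bar>y\<bar>) ^ N"
    proof (rule P3_pow[OF I1'])
      show "real n \<le> Mx" unfolding Mx_def by (rule n_le_M[OF p k1 n])
      show "0 \<le> Mx" unfolding Mx_def using M_pos[OF p k1] by simp
      show "2 * k - 2 + nat \<lceil>Mx\<rceil> \<le> N" unfolding NMf Mx_def by simp
    qed
    have "\<bar>((a * al3) * y ^ (2 * k - 2) + (a * al4) * (y ^ (4 * k - 2) * e_b p k b y)) * q_minus p k s q y\<bar>
        \<le> (a * (A3 p k b0 + A4b p k b0) * \<bar>y\<bar> ^ (2 * k - 2)) * (I powr (- \<delta>) * (I powr (- Mx) + \<bar>y\<bar> powr Mx))"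
      unfolding abs_mult by (rule mult_mono[OF W Q]) (use a0 An in auto)
    also have "\<dots> = (a * (A3 p k b0 + A4b p k b0) * I powr (- \<delta>)) * (\<bar>y\<bar> ^ (2 * k - 2) * (I powr (- Mx) + \<bar>y\<bar> powr Mx))"
      by (simp add: algebra_simps)
    also have "\<dots> \<le> (a * (A3 p k b0 + A4b p k b0) * I powr (- \<delta>)) * (2 / I ^ n * (1 + I * \<bar>y\<bar>) ^ N)"
      by (rule mult_left_mono[OF P]) (use a0 An in auto)
    also have "\<dots> = 2 * (a * (A3 p k b0 + A4b p k b0)) * I powr (- \<delta>) / I ^ n * (1 + I * \<bar>y\<bar>) ^ N"
      by simp
    finally show "\<bar>((a * al3) * y ^ (2 * k - 2) + (a * al4) * (y ^ (4 * k - 2) * e_b p k b y)) * q_minus p k s q y\<bar>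
        \<le> 2 * (a * (A3 p k b0 + A4b p k b0)) * I powr (- \<delta>) / I ^ n * (1 + I * \<bar>y\<bar>) ^ N" .
  qed
  have Eall: "Ex I n (R_op p k s b q)
      (a * (A1 p k b0 + A2 p k b0 * KEc) + (\<Sum>m = 0..Mf. \<Sum>l = 0..m div 2. I powr (- \<delta>) * KW * hc m l)
        + 2 * (a * (A3 p k b0 + A4b p k b0)) * I powr (- \<delta>)) N"
    by (rule Ex_cong[OF Ex_add[OF Ex_add[OF E1 E2] E3]])
      (simp only: R_decomp[OF k1] a_def I_def al1_def al2_def al3_def al4_def Mf_def)
  show ?thesis
  proof (rule Ex_mono[OF Eall[unfolded I_def N_def]])
    have S: "(\<Sum>m = 0..Mf. \<Sum>l = 0..m div 2. I powr (- \<delta>) * KW * hc m l) = (a * I powr (- \<delta>)) * ((A3 p k b0 + A4 p k b0 * KEc) * HS p k)"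
    proof -
      have "(\<Sum>m = 0..Mf. \<Sum>l = 0..m div 2. I powr (- \<delta>) * KW * hc m l) = (I powr (- \<delta>) * KW) * HS p k"
        unfolding HS_def Mf_def by (simp only: sum_distrib_left)
      also have "\<dots> = (a * I powr (- \<delta>)) * ((A3 p k b0 + A4 p k b0 * KEc) * HS p k)"
        unfolding KW_def by (simp only: ac_simps)
      finally show ?thesis .
    qed
    define X1 where "X1 = A1 p k b0 + A2 p k b0 * KEc"
    define X2 where "X2 = (A3 p k b0 + A4 p k b0 * KEc) * HS p k"
    define X3 where "X3 = 2 * (A3 p k b0 + A4b p k b0)"
    have X: "X1 \<ge> 0" "X2 \<ge> 0" "X3 \<ge> 0" unfolding X1_def X2_def X3_def using An by auto
    have "a * X1 + (a * I powr (- \<delta>)) * X2 + (a * I powr (- \<delta>)) * X3 \<le>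
        I powr (- 2 * \<delta>) * X1 + I powr (- 2 * \<delta>) * X2 + I powr (- 2 * \<delta>) * X3"
      by (intro add_mono mult_right_mono ad ad2 X)
    also have "\<dots> = C0 p k b0 * I powr (- 2 * \<delta>)"
      unfolding C0_def X1_def X2_def X3_def KEc_def by (simp add: algebra_simps)
    finally show "a * (A1 p k b0 + A2 p k b0 * KEc) + (\<Sum>m = 0..Mf. \<Sum>l = 0..m div 2. I_s k s powr (- \<delta>) * KW * hc m l)
        + 2 * (a * (A3 p k b0 + A4b p k b0)) * I_s k s powr (- \<delta>) \<le> C0 p k b0 * I_s k s powr (- 2 * \<delta>)"
      unfolding I_def[symmetric] S X1_def X2_def X3_def by (simp add: algebra_simps)
  qed (use I0 I_def in auto)
qed




lemma R_meas: "q \<in> borel_measurable borel \<Longrightarrow> R_op p k s b q \<in> borel_measurable borel"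
  unfolding R_op_def[abs_def] Let_def e_b_def by measurable

lemma I_ge1: "k \<ge> 1 \<Longrightarrow> s \<ge> 0 \<Longrightarrow> I_s k s \<ge> 1"
  unfolding I_s_def by (simp add: divide_le_eq_1)

theorem mainTheorem11:
  fixes p :: real and k :: nat and b0 :: real
  assumes "p > 1" and "k \<ge> 2" and "b0 > 0"
  shows "\<exists>\<delta>8 > 0. \<forall>\<delta>. 0 < \<delta> \<and> \<delta> < \<delta>8 \<longrightarrow>
           (\<exists>s8 \<ge> 1. \<exists>C > 0. \<forall>s0 \<ge> s8. \<forall>sbar.
              \<forall>(q :: real \<Rightarrow> real \<Rightarrow> real) (b :: real \<Rightarrow> real).
                (\<forall>s \<in> {s0..sbar}. in_V p k \<delta> b0 s (q s) (b s)) \<longrightarrow>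
                (\<forall>s \<in> {s0..sbar}. \<forall>n \<le> M_floor p k.
                   \<bar>P_proj k n s (R_op p k s (b s) (q s))\<bar> \<le> C * (I_s k s) powr (- 2 * \<delta>)))"
proof -
  have p: "p > 1" and k: "k \<ge> 2" and b0: "b0 > 0" using assms by auto
  have k1: "k \<ge> 1" using k by simp
  define S where "S = (\<Sum>n\<le>M_floor p k. Kc n (N0 p k))"
  define C where "C = C0 p k b0 * S + 1"
  have S0: "S \<ge> 0" unfolding S_def by (intro sum_nonneg Kc_nonneg)
  have C00: "C0 p k b0 \<ge> 0" by (rule C0_nonneg[OF p k1 b0])
  have Cpos: "C > 0" unfolding C_def using S0 C00 by (simp add: add_nonneg_pos)
  have key: "\<bar>P_proj k n s (R_op p k s b q)\<bar> \<le> C * (I_s k s) powr (- 2 * \<delta>)"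
    if d0: "0 < \<delta>" and d1: "\<delta> \<le> 1" and s1: "s \<ge> 1" and V: "in_V p k \<delta> b0 s q b"
      and n: "n \<le> M_floor p k" for \<delta> s q b n
  proof -
    have I1: "I_s k s \<ge> 1" by (rule I_ge1) (use k1 s1 in auto)
    have qm: "q \<in> borel_measurable borel" using V unfolding in_V_def by simp
    have E: "Ex (I_s k s) n (R_op p k s b q) (C0 p k b0 * I_s k s powr (- 2 * \<delta>)) (N0 p k)"
      by (rule Ex_R[OF p k b0 I1 d0 d1 V n])
    then obtain c where c: "\<And>y. \<bar>R_op p k s b q y - (\<Sum>i<n. c i * y ^ i)\<bar>
        \<le> C0 p k b0 * I_s k s powr (- 2 * \<delta>) / I_s k s ^ n * (1 + I_s k s * \<bar>y\<bar>) ^ N0 p k"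
      unfolding Ex_def by blast
    have "\<bar>P_proj k n s (R_op p k s b q)\<bar> \<le> C0 p k b0 * I_s k s powr (- 2 * \<delta>) * Kc n (N0 p k)"
      by (rule KL[OF R_meas[OF qm] c])
    also have "\<dots> = (C0 p k b0 * Kc n (N0 p k)) * I_s k s powr (- 2 * \<delta>)" by (simp add: ac_simps)
    also have "\<dots> \<le> C * I_s k s powr (- 2 * \<delta>)"
    proof (rule mult_right_mono)
      have "Kc n (N0 p k) \<le> S" unfolding S_def
        by (rule member_le_sum) (use n Kc_nonneg in auto)
      then have "C0 p k b0 * Kc n (N0 p k) \<le> C0 p k b0 * S" by (rule mult_left_mono[OF _ C00])
      then show "C0 p k b0 * Kc n (N0 p k) \<le> C" unfolding C_def by simp
    qed simp
    finally show ?thesis .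
  qed
  show ?thesis
  proof (rule exI[of _ 1], intro conjI allI impI)
    fix \<delta> :: real assume d: "0 < \<delta> \<and> \<delta> < 1"
    show "\<exists>s8 \<ge> 1. \<exists>C > 0. \<forall>s0 \<ge> s8. \<forall>sbar.
              \<forall>(q :: real \<Rightarrow> real \<Rightarrow> real) (b :: real \<Rightarrow> real).
                (\<forall>s \<in> {s0..sbar}. in_V p k \<delta> b0 s (q s) (b s)) \<longrightarrow>
                (\<forall>s \<in> {s0..sbar}. \<forall>n \<le> M_floor p k.
                   \<bar>P_proj k n s (R_op p k s (b s) (q s))\<bar> \<le> C * (I_s k s) powr (- 2 * \<delta>))"
    proof (rule exI[of _ 1], intro conjI exI[of _ C] Cpos allI impI ballI)
      fix s0 sbar :: real and q :: "real \<Rightarrow> real \<Rightarrow> real" and b :: "real \<Rightarrow> real" and s :: real and n :: nat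
      assume s0: "1 \<le> s0" and V: "\<forall>s\<in>{s0..sbar}. in_V p k \<delta> b0 s (q s) (b s)"
        and s: "s \<in> {s0..sbar}" and n: "n \<le> M_floor p k"
      show "\<bar>P_proj k n s (R_op p k s (b s) (q s))\<bar> \<le> C * I_s k s powr (- 2 * \<delta>)"
        by (rule key) (use d s0 V s n in auto)
    qed simp
  qed simp
qed


end
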